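(* Let $X$ be a regular space and $f\in H^\infty$. Then the weak-star closure in $X'$ of $fH^\infty=\{fh:h\in H^\infty\}$ equals $[f]_{X'}$.
   Context: A regular space is a Banach space $X$ of analytic functions on $\mathbb{D}$ such that (i) $X\subseteq H^1$; (ii) the analytic polynomials and the functions analytic in a neighbourhood of $\overline{\mathbb{D}}$ are dense in $X$; (iii) for every $\ell\in X^*$, $\limsup_{n\to\infty}|\ell(z^n)|^{1/n}\le1$. The Cauchy dual $X'$ is the space of analytic $g$ on $\mathbb{D}$ for which $f\mapsto\lim_{r\to1^-}\int_{\partial\mathbb{D}}f(r\zeta)\overline{g(r\zeta)}dm(\zeta)$ is bounded on $X$; it is identified with $X^*$ through this pairing and equipped with the weak-star topology; $H^\infty\subset X'$. $[f]_{X'}$ is the weak-star closure in $X'$ of $\{pf: p\text{ analytic polynomial}\}$. *)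

theory Defs
  imports "HOL-Analysis.Analysis" "HOL-Computational_Algebra.Polynomial"
    "HOL-Library.Liminf_Limsup"
begin

abbreviation unit_disc :: "complex set" where
  "unit_disc \<equiv> ball 0 1"

definition circle_mean :: "real \<Rightarrow> (complex \<Rightarrow> complex) \<Rightarrow> complex" where
  "circle_mean r F = integral {0..2*pi} (\<lambda>t. F (complex_of_real r * cis t)) / complex_of_real (2*pi)"

definition H1 :: "(complex \<Rightarrow> complex) set" where
  "H1 = {f. f holomorphic_on unit_disc \<and>
        (\<exists>C. \<forall>r. 0 \<le> r \<and> r < 1 \<longrightarrow>
           integral {0..2*pi} (\<lambda>t. cmod (f (complex_of_real r * cis t))) / (2*pi) \<le> C)}"

definition Hinf :: "(complex \<Rightarrow> complex) set" where
  "Hinf = {f. f holomorphic_on unit_disc \<and> (\<exists>C. \<forall>z\<in>unit_disc. cmod (f z) \<le> C)}"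

definition analytic_polys :: "(complex \<Rightarrow> complex) set" where
  "analytic_polys = {(\<lambda>z. poly p z) | p :: complex poly. True}"

text \<open>Banach space (X, N) of analytic functions on the disc: X a set of functions,
  N a complete norm on X; elements are identified when they agree on the disc.\<close>
definition banach_fun_space :: "(complex \<Rightarrow> complex) set \<Rightarrow> ((complex \<Rightarrow> complex) \<Rightarrow> real) \<Rightarrow> bool" where
  "banach_fun_space X N \<longleftrightarrow>
     (\<forall>f\<in>X. f holomorphic_on unit_disc) \<and>
     (\<lambda>z. 0) \<in> X \<and>
     (\<forall>f\<in>X. \<forall>g\<in>X. (\<lambda>z. f z + g z) \<in> X) \<and>
     (\<forall>f\<in>X. \<forall>c. (\<lambda>z. c * f z) \<in> X) \<and>
     (\<forall>f\<in>X. \<forall>g\<in>X. N (\<lambda>z. f z + g z) \<le> N f + N g) \<and>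
     (\<forall>f\<in>X. \<forall>c. N (\<lambda>z. c * f z) = cmod c * N f) \<and>
     (\<forall>f\<in>X. 0 \<le> N f) \<and>
     (\<forall>f\<in>X. N f = 0 \<longleftrightarrow> (\<forall>z\<in>unit_disc. f z = 0)) \<and>
     (\<forall>s. (\<forall>n. s n \<in> X) \<and>
          (\<forall>e>0. \<exists>M. \<forall>m\<ge>M. \<forall>n\<ge>M. N (\<lambda>z. s m z - s n z) < e) \<longrightarrow>
          (\<exists>f\<in>X. (\<lambda>n. N (\<lambda>z. s n z - f z)) \<longlonglongrightarrow> 0))"

definition bounded_functional ::
  "(complex \<Rightarrow> complex) set \<Rightarrow> ((complex \<Rightarrow> complex) \<Rightarrow> real) \<Rightarrow> ((complex \<Rightarrow> complex) \<Rightarrow> complex) \<Rightarrow> bool" where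
  "bounded_functional X N l \<longleftrightarrow>
     (\<forall>f\<in>X. \<forall>g\<in>X. l (\<lambda>z. f z + g z) = l f + l g) \<and>
     (\<forall>f\<in>X. \<forall>c. l (\<lambda>z. c * f z) = c * l f) \<and>
     (\<exists>C. \<forall>f\<in>X. cmod (l f) \<le> C * N f)"

definition regular_fun_space :: "(complex \<Rightarrow> complex) set \<Rightarrow> ((complex \<Rightarrow> complex) \<Rightarrow> real) \<Rightarrow> bool" where
  "regular_fun_space X N \<longleftrightarrow>
     banach_fun_space X N \<and>
     X \<subseteq> H1 \<and>
     analytic_polys \<subseteq> X \<and>
     (\<forall>f\<in>X. \<forall>e>0. \<exists>p\<in>analytic_polys. N (\<lambda>z. f z - p z) < e) \<and>
     {g. \<exists>R>1. g holomorphic_on ball 0 R} \<subseteq> X \<and>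
     (\<forall>f\<in>X. \<forall>e>0. \<exists>g. (\<exists>R>1. g holomorphic_on ball 0 R) \<and> N (\<lambda>z. f z - g z) < e) \<and>
     (\<forall>l. bounded_functional X N l \<longrightarrow>
        limsup (\<lambda>n. ereal (root n (cmod (l (\<lambda>z. z ^ n))))) \<le> 1)"

definition cauchy_pairing :: "(complex \<Rightarrow> complex) \<Rightarrow> (complex \<Rightarrow> complex) \<Rightarrow> complex" where
  "cauchy_pairing f g = Lim (at_left (1::real)) (\<lambda>r. circle_mean r (\<lambda>z. f z * cnj (g z)))"

definition cauchy_dual :: "(complex \<Rightarrow> complex) set \<Rightarrow> ((complex \<Rightarrow> complex) \<Rightarrow> real) \<Rightarrow> (complex \<Rightarrow> complex) set" where
  "cauchy_dual X N = {g. g holomorphic_on unit_disc \<and>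
     (\<forall>f\<in>X. \<exists>L. ((\<lambda>r. circle_mean r (\<lambda>z. f z * cnj (g z))) \<longlongrightarrow> L) (at_left (1::real))) \<and>
     (\<exists>C. \<forall>f\<in>X. cmod (cauchy_pairing f g) \<le> C * N f)}"

text \<open>Weak-star closure in X' (topology sigma(X', X)) of a set S, via basic neighbourhoods.\<close>
definition weak_star_closure ::
  "(complex \<Rightarrow> complex) set \<Rightarrow> ((complex \<Rightarrow> complex) \<Rightarrow> real) \<Rightarrow> (complex \<Rightarrow> complex) set \<Rightarrow> (complex \<Rightarrow> complex) set" where
  "weak_star_closure X N S = {g \<in> cauchy_dual X N.
     \<forall>F e. finite F \<and> F \<subseteq> X \<and> e > 0 \<longrightarrow>
       (\<exists>s\<in>S. \<forall>f\<in>F. cmod (cauchy_pairing f s - cauchy_pairing f g) < e)}"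

definition dual_invariant_subspace ::
  "(complex \<Rightarrow> complex) set \<Rightarrow> ((complex \<Rightarrow> complex) \<Rightarrow> real) \<Rightarrow> (complex \<Rightarrow> complex) \<Rightarrow> (complex \<Rightarrow> complex) set" where
  "dual_invariant_subspace X N f = weak_star_closure X N {(\<lambda>z. p z * f z) | p. p \<in> analytic_polys}"

end

theory Submission
  imports Defs "HOL-Complex_Analysis.Complex_Analysis"
begin

lemma integral_cis_int:
  fixes m :: int
  shows "integral {0..2*pi} (\<lambda>t. cis (of_int m * t)) = (if m = 0 then 2*pi else 0)"
proof (cases "m = 0")
  case True then show ?thesis by (simp add: scaleR_conv_of_real)
next
  case False
  have a: "(\<i> * of_int m :: complex) \<noteq> 0" using False by simp
  have "integral {0..2*pi} (\<lambda>t. exp((\<i> * of_int m) * complex_of_real t)) = (exp((\<i> * of_int m) * of_real (2*pi)) - 1) / (\<i> * of_int m)"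
    by (rule integral_exp) (use a in auto)
  also have "exp((\<i> * of_int m) * of_real (2*pi)) = 1"
    using exp_plus_2pin[of 0 m] by (simp add: mult_ac)
  finally have "integral {0..2*pi} (\<lambda>t. exp((\<i> * of_int m) * complex_of_real t)) = 0" by simp
  moreover have "(\<lambda>t. cis (of_int m * t)) = (\<lambda>t. exp((\<i> * of_int m) * complex_of_real t))"
    by (auto simp: cis_conv_exp mult_ac)
  ultimately show ?thesis using False by simp
qed

lemma orth_cis:
  "integral {0..2*pi} (\<lambda>t. cis t ^ j * cnj (cis t ^ k)) = (if j = k then 2*pi else 0)"
proof -
  have "(\<lambda>t. cis t ^ j * cnj (cis t ^ k)) = (\<lambda>t. cis (of_int (int j - int k) * t))"
  proof
    fix t
    have "cis t ^ j * cnj (cis t ^ k) = cis (real j * t) * cis (- (real k * t))"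
      by (simp add: Complex.DeMoivre cis_cnj)
    also have "\<dots> = cis (of_int (int j - int k) * t)"
      by (simp add: cis_mult algebra_simps)
    finally show "cis t ^ j * cnj (cis t ^ k) = cis (of_int (int j - int k) * t)" .
  qed
  then show ?thesis using integral_cis_int[of "int j - int k"] by auto
qed

lemma cont_cis_pow: "continuous_on S (\<lambda>t::real. cis t ^ k)"
  by (intro continuous_intros)

lemma integrable_cont_02:
  fixes g :: "real \<Rightarrow> complex"
  shows "continuous_on {0..2*pi} g \<Longrightarrow> g integrable_on {0..2*pi}"
  by (rule integrable_continuous_real)

lemma termwise_integral:
  fixes c :: "nat \<Rightarrow> complex" and g :: "real \<Rightarrow> complex"
  assumes sc: "summable (\<lambda>k. norm (c k))" and cg: "continuous_on {0..2*pi} g"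
  shows "(\<lambda>k. c k * integral {0..2*pi} (\<lambda>t. cis t ^ k * g t)) sums
           integral {0..2*pi} (\<lambda>t. (\<Sum>k. c k * cis t ^ k) * g t)"
proof -
  obtain B where B0: "\<forall>x\<in>g ` {0..2*pi}. norm x \<le> B"
    using compact_imp_bounded[OF compact_continuous_image[OF cg compact_Icc]]
    by (auto simp: bounded_iff)
  have B: "\<And>t. t \<in> {0..2*pi} \<Longrightarrow> norm (g t) \<le> B" using B0 by blast
  define f where "f = (\<lambda>k t. c k * cis t ^ k * g t)"
  have ul: "uniform_limit {0..2*pi} (\<lambda>n t. \<Sum>k<n. f k t) (\<lambda>t. \<Sum>k. f k t) sequentially"
  proof (rule Weierstrass_m_test)
    show "norm (f k t) \<le> norm (c k) * B" if "t \<in> {0..2*pi}" for k t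
      using B[OF that] by (simp add: f_def norm_mult norm_power mult_left_mono)
    show "summable (\<lambda>k. norm (c k) * B)" using sc by (rule summable_mult2)
  qed
  have cont: "continuous_on {0..2*pi} (\<lambda>t. \<Sum>k<n. f k t)" for n
    unfolding f_def by (intro continuous_intros cg)
  obtain I J where I: "\<And>n. ((\<lambda>t. \<Sum>k<n. f k t) has_integral I n) {0..2*pi}"
    and J: "((\<lambda>t. \<Sum>k. f k t) has_integral J) {0..2*pi}" and IJ: "I \<longlonglongrightarrow> J"
    using uniform_limit_integral[OF ul cont] by auto
  have In: "I n = (\<Sum>k<n. c k * integral {0..2*pi} (\<lambda>t. cis t ^ k * g t))" for n
  proof -
    have "((\<lambda>t. \<Sum>k<n. f k t) has_integral (\<Sum>k<n. c k * integral {0..2*pi} (\<lambda>t. cis t ^ k * g t))) {0..2*pi}"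
    proof (rule has_integral_sum)
      fix k assume "k \<in> {..<n}"
      have "((\<lambda>t. cis t ^ k * g t) has_integral integral {0..2*pi} (\<lambda>t. cis t ^ k * g t)) {0..2*pi}"
        by (rule integrable_integral, rule integrable_continuous_real, intro continuous_intros cg)
      from has_integral_mult_right[OF this, of "c k"]
      show "(f k has_integral c k * integral {0..2*pi} (\<lambda>t. cis t ^ k * g t)) {0..2*pi}"
        unfolding f_def by (simp add: mult.assoc)
    qed auto
    then show ?thesis using I[of n] by (rule has_integral_unique[symmetric])
  qed
  have "(\<lambda>t. \<Sum>k. f k t) = (\<lambda>t. (\<Sum>k. c k * cis t ^ k) * g t)"
  proof
    fix t
    have "summable (\<lambda>k. c k * cis t ^ k)"
      by (rule summable_norm_cancel) (use sc in \<open>simp add: norm_mult norm_power\<close>)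
    then show "(\<Sum>k. f k t) = (\<Sum>k. c k * cis t ^ k) * g t"
      unfolding f_def by (simp add: suminf_mult2)
  qed
  then have "J = integral {0..2*pi} (\<lambda>t. (\<Sum>k. c k * cis t ^ k) * g t)"
    using J by (simp add: integral_unique)
  moreover have "I = (\<lambda>n. \<Sum>k<n. c k * integral {0..2*pi} (\<lambda>t. cis t ^ k * g t))"
    by (rule ext) (rule In)
  ultimately show ?thesis using IJ unfolding sums_def by simp
qed


definition tc :: "(complex \<Rightarrow> complex) \<Rightarrow> nat \<Rightarrow> complex" where
  "tc W k = (deriv ^^ k) W 0 / fact k"

lemma tc_sums:
  assumes "W holomorphic_on ball 0 R" "norm z < R"
  shows "(\<lambda>k. tc W k * z ^ k) sums W z"
  using holomorphic_power_series[OF assms(1), of z] assms(2) by (simp add: tc_def)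

lemma tc_cauchy:
  assumes hol: "W holomorphic_on ball 0 R" and s: "0 < s" "s < R"
    and B: "\<And>z. norm z = s \<Longrightarrow> norm (W z) \<le> B"
  shows "norm (tc W k) \<le> B / s ^ k"
proof -
  have sub: "cball 0 s \<subseteq> ball (0::complex) R" using s by auto
  have "norm ((deriv ^^ k) W 0) \<le> fact k * B / s ^ k"
  proof (rule Cauchy_inequality)
    show "W holomorphic_on ball 0 s" using hol sub ball_subset_cball by (meson holomorphic_on_subset subset_trans)
    show "continuous_on (cball 0 s) W"
      using holomorphic_on_imp_continuous_on[OF holomorphic_on_subset[OF hol sub]] .
    show "0 < s" by fact
    show "norm (W x) \<le> B" if "norm (0 - x) = s" for x using B[of x] that by simp
  qed
  then show ?thesis
    by (simp add: tc_def norm_divide field_simps)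
qed

lemma sphere_bound:
  fixes W :: "complex \<Rightarrow> complex"
  assumes "continuous_on (sphere 0 s) W"
  obtains B where "\<And>z. norm z = s \<Longrightarrow> norm (W z :: complex) \<le> B"
proof -
  obtain B where B0: "\<forall>x\<in>W ` sphere 0 s. norm x \<le> B"
    using compact_imp_bounded[OF compact_continuous_image[OF assms compact_sphere]]
    by (auto simp: bounded_iff)
  show ?thesis by (rule that[of B]) (use B0 in auto)
qed

lemma tc_abs_summable:
  assumes hol: "W holomorphic_on ball 0 R" and b: "0 \<le> b" "b < R"
  shows "summable (\<lambda>k. norm (tc W k) * b ^ k)"
proof -
  define s where "s = (b + R) / 2"
  have s: "0 < s" "s < R" "b < s" using b by (auto simp: s_def)
  have "continuous_on (sphere 0 s) W"
    using holomorphic_on_imp_continuous_on[OF hol] by (rule continuous_on_subset) (use s in auto)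
  from sphere_bound[OF this] obtain B where B: "\<And>z. norm z = s \<Longrightarrow> norm (W z) \<le> B" by blast
  have le: "norm (norm (tc W k) * b ^ k) \<le> B * (b / s) ^ k" for k
  proof -
    have "norm (tc W k) \<le> B / s ^ k" by (rule tc_cauchy[OF hol s(1,2) B])
    then have "norm (tc W k) * b ^ k \<le> B / s ^ k * b ^ k"
      by (rule mult_right_mono) (use b in simp)
    then show ?thesis using b s by (simp add: power_divide)
  qed
  show ?thesis
  proof (rule summable_comparison_test[OF _ summable_mult[OF summable_geometric]])
    show "\<exists>N. \<forall>n\<ge>N. norm (norm (tc W n) * b ^ n) \<le> B * (b / s) ^ n" using le by blast
    show "norm (b / s) < 1" using b s by simp
  qed
qed

lemma cont_circ:
  assumes hol: "W holomorphic_on ball 0 R" and b: "0 \<le> b" "b < R"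
  shows "continuous_on A (\<lambda>t. W (of_real b * cis t))"
proof -
  have "continuous_on (ball 0 R) W" by (rule holomorphic_on_imp_continuous_on[OF hol])
  moreover have "(\<lambda>t. of_real b * cis t) ` A \<subseteq> ball 0 R" using b by (auto simp: norm_mult)
  ultimately show ?thesis
    by (intro continuous_on_compose2[where f = "\<lambda>t. of_real b * cis t" and g = W]) (auto intro!: continuous_intros)
qed

lemma circ_expand:
  assumes hol: "W holomorphic_on ball 0 R" and b: "0 \<le> b" "b < R"
  shows "W (of_real b * cis t) = (\<Sum>k. (tc W k * of_real b ^ k) * cis t ^ k)"
proof -
  have "(\<lambda>k. tc W k * (of_real b * cis t) ^ k) sums W (of_real b * cis t)"
    by (rule tc_sums[OF hol]) (use b in \<open>simp add: norm_mult\<close>)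
  then show ?thesis by (simp add: sums_iff power_mult_distrib mult.assoc)
qed

lemma circ_coef_summable:
  assumes hol: "W holomorphic_on ball 0 R" and b: "0 \<le> b" "b < R"
  shows "summable (\<lambda>k. norm (tc W k * of_real b ^ k))"
  using tc_abs_summable[OF assms] b by (simp add: norm_mult norm_power)

lemma coef_formula:
  assumes hol: "W holomorphic_on ball 0 R" and b: "0 \<le> b" "b < R"
  shows "integral {0..2*pi} (\<lambda>t. W (of_real b * cis t) * cnj (cis t ^ k)) = 2 * pi * (tc W k * of_real b ^ k)"
proof -
  have cg: "continuous_on {0..2*pi} (\<lambda>t. cnj (cis t ^ k))" by (intro continuous_intros)
  have S: "(\<lambda>j. (tc W j * of_real b ^ j) * integral {0..2*pi} (\<lambda>t. cis t ^ j * cnj (cis t ^ k))) sums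
           integral {0..2*pi} (\<lambda>t. (\<Sum>j. (tc W j * of_real b ^ j) * cis t ^ j) * cnj (cis t ^ k))"
    by (rule termwise_integral[OF circ_coef_summable[OF assms] cg])
  have "(\<lambda>j. (tc W j * of_real b ^ j) * integral {0..2*pi} (\<lambda>t. cis t ^ j * cnj (cis t ^ k)))
        = (\<lambda>j. if j = k then 2 * pi * (tc W k * of_real b ^ k) else 0)"
    by (auto simp: orth_cis simp del: complex_cnj_power)
  with S have "(\<lambda>j. if j = k then 2 * pi * (tc W k * of_real b ^ k) else 0) sums
           integral {0..2*pi} (\<lambda>t. W (of_real b * cis t) * cnj (cis t ^ k))"
    by (simp add: circ_expand[OF assms, symmetric])
  moreover have "(\<lambda>j. if j = k then 2 * pi * (tc W k * of_real b ^ k) else 0) sums (2 * pi * (tc W k * of_real b ^ k))"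
    by (rule sums_single)
  ultimately show ?thesis using sums_unique2 by blast
qed

lemma pairing_series:
  assumes holF: "F holomorphic_on ball 0 R1" and a: "0 \<le> a" "a < R1"
    and holW: "W holomorphic_on ball 0 R2" and b: "0 \<le> b" "b < R2"
  shows "(\<lambda>k. 2 * pi * (tc F k * cnj (tc W k) * of_real (a * b) ^ k)) sums
           integral {0..2*pi} (\<lambda>t. F (of_real a * cis t) * cnj (W (of_real b * cis t)))"
proof -
  have cg: "continuous_on {0..2*pi} (\<lambda>t. cnj (W (of_real b * cis t)))"
    by (intro continuous_intros cont_circ[OF holW b])
  have S: "(\<lambda>j. (tc F j * of_real a ^ j) * integral {0..2*pi} (\<lambda>t. cis t ^ j * cnj (W (of_real b * cis t)))) sums
           integral {0..2*pi} (\<lambda>t. (\<Sum>j. (tc F j * of_real a ^ j) * cis t ^ j) * cnj (W (of_real b * cis t)))"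
    by (rule termwise_integral[OF circ_coef_summable[OF holF a] cg])
  have I: "integral {0..2*pi} (\<lambda>t. cis t ^ j * cnj (W (of_real b * cis t))) = 2 * pi * cnj (tc W j * of_real b ^ j)" for j
  proof -
    have "integral {0..2*pi} (\<lambda>t. cis t ^ j * cnj (W (of_real b * cis t)))
        = cnj (integral {0..2*pi} (\<lambda>t. W (of_real b * cis t) * cnj (cis t ^ j)))"
      by (simp add: Henstock_Kurzweil_Integration.integral_cnj mult.commute)
    also have "\<dots> = 2 * pi * cnj (tc W j * of_real b ^ j)"
      by (simp add: coef_formula[OF holW b] del: complex_cnj_power)
    finally show ?thesis .
  qed
  have "(\<lambda>j. (tc F j * of_real a ^ j) * integral {0..2*pi} (\<lambda>t. cis t ^ j * cnj (W (of_real b * cis t))))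
      = (\<lambda>k. 2 * pi * (tc F k * cnj (tc W k) * of_real (a * b) ^ k))"
    by (auto simp: I power_mult_distrib)
  with S show ?thesis
    by (simp add: circ_expand[OF holF a, symmetric])
qed


lemma integral_of_real_cont:
  fixes f :: "real \<Rightarrow> real"
  assumes "continuous_on {0..2*pi} f"
  shows "integral {0..2*pi} (\<lambda>t. complex_of_real (f t)) = of_real (integral {0..2*pi} f)"
  using has_integral_of_real[where 'b=complex, OF integrable_integral[OF integrable_continuous_real[OF assms]]]
  by (rule integral_unique)

lemma cont_norm_circ:
  assumes hol: "W holomorphic_on ball 0 R" and b: "0 \<le> b" "b < R"
  shows "continuous_on A (\<lambda>t. norm (W (of_real b * cis t)))"
  by (intro continuous_intros cont_circ[OF hol b])

lemma parseval:
  assumes hol: "W holomorphic_on ball 0 R" and b: "0 \<le> b" "b < R"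
  shows "(\<lambda>k. 2 * pi * ((norm (tc W k))\<^sup>2 * (b * b) ^ k)) sums
           integral {0..2*pi} (\<lambda>t. (norm (W (of_real b * cis t)))\<^sup>2)"
proof -
  have S: "(\<lambda>k. 2 * pi * (tc W k * cnj (tc W k) * of_real (b * b) ^ k)) sums
           integral {0..2*pi} (\<lambda>t. W (of_real b * cis t) * cnj (W (of_real b * cis t)))"
    by (rule pairing_series[OF hol b hol b])
  have c: "continuous_on {0..2*pi} (\<lambda>t. (norm (W (of_real b * cis t)))\<^sup>2)"
    by (intro continuous_intros cont_circ[OF hol b])
  have "integral {0..2*pi} (\<lambda>t. W (of_real b * cis t) * cnj (W (of_real b * cis t)))
      = integral {0..2*pi} (\<lambda>t. complex_of_real ((norm (W (of_real b * cis t)))\<^sup>2))"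
    by (simp only: complex_norm_square)
  also have "\<dots> = of_real (integral {0..2*pi} (\<lambda>t. (norm (W (of_real b * cis t)))\<^sup>2))"
    by (rule integral_of_real_cont[OF c])
  finally have I: "integral {0..2*pi} (\<lambda>t. W (of_real b * cis t) * cnj (W (of_real b * cis t)))
      = of_real (integral {0..2*pi} (\<lambda>t. (norm (W (of_real b * cis t)))\<^sup>2))" .
  have T: "(\<lambda>k. 2 * pi * (tc W k * cnj (tc W k) * of_real (b * b) ^ k))
      = (\<lambda>k. complex_of_real (2 * pi * ((norm (tc W k))\<^sup>2 * (b * b) ^ k)))"
    by (auto simp flip: complex_norm_square)
  from S show ?thesis unfolding I T by (simp only: sums_of_real_iff)
qed

lemma parseval_mono:
  assumes hol: "W holomorphic_on ball 0 R" and rs: "0 \<le> r" "r \<le> s" "s < R"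
  shows "integral {0..2*pi} (\<lambda>t. (norm (W (of_real r * cis t)))\<^sup>2)
       \<le> integral {0..2*pi} (\<lambda>t. (norm (W (of_real s * cis t)))\<^sup>2)"
proof (rule sums_le[OF _ parseval[OF hol] parseval[OF hol]])
  fix k
  have "(r * r) ^ k \<le> (s * s) ^ k" using rs by (intro power_mono mult_mono) auto
  then show "2 * pi * ((norm (tc W k))\<^sup>2 * (r * r) ^ k) \<le> 2 * pi * ((norm (tc W k))\<^sup>2 * (s * s) ^ k)"
    by (intro mult_left_mono) auto
qed (use rs in auto)

lemma H2_summable:
  assumes hol: "W holomorphic_on ball 0 1"
    and C: "\<And>r. 0 \<le> r \<Longrightarrow> r < 1 \<Longrightarrow> integral {0..2*pi} (\<lambda>t. (norm (W (of_real r * cis t)))\<^sup>2) \<le> C"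
  shows "summable (\<lambda>k. 2 * pi * (norm (tc W k))\<^sup>2)"
    and "(\<Sum>k. 2 * pi * (norm (tc W k))\<^sup>2) \<le> C"
proof -
  have part: "(\<Sum>k<n. 2 * pi * (norm (tc W k))\<^sup>2) \<le> C" for n
  proof -
    have le: "(\<Sum>k<n. 2 * pi * ((norm (tc W k))\<^sup>2 * (r * r) ^ k)) \<le> C" if r: "0 \<le> r" "r < 1" for r
    proof -
      have "(\<Sum>k<n. 2 * pi * ((norm (tc W k))\<^sup>2 * (r * r) ^ k))
          \<le> integral {0..2*pi} (\<lambda>t. (norm (W (of_real r * cis t)))\<^sup>2)"
        by (rule sum_le_suminf[OF sums_summable[OF parseval[OF hol r]], unfolded sums_unique[OF parseval[OF hol r], symmetric]])
           (use r in auto)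
      also have "\<dots> \<le> C" by (rule C[OF r])
      finally show ?thesis .
    qed
    have lim: "((\<lambda>r. \<Sum>k<n. 2 * pi * ((norm (tc W k))\<^sup>2 * (r * r) ^ k)) \<longlongrightarrow>
               (\<Sum>k<n. 2 * pi * ((norm (tc W k))\<^sup>2 * (1 * 1) ^ k))) (at_left 1)"
      by (intro tendsto_intros)
    have ev: "eventually (\<lambda>r. (\<Sum>k<n. 2 * pi * ((norm (tc W k))\<^sup>2 * (r * r) ^ k)) \<le> C) (at_left (1::real))"
      unfolding eventually_at_left_field
      by (rule exI[of _ 0]) (auto intro!: le)
    have "(\<Sum>k<n. 2 * pi * ((norm (tc W k))\<^sup>2 * (1 * 1) ^ k)) \<le> C"
      by (rule tendsto_upperbound[OF lim ev]) simp
    then show ?thesis by simp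
  qed
  show "summable (\<lambda>k. 2 * pi * (norm (tc W k))\<^sup>2)"
    by (rule summableI_nonneg_bounded[OF _ part]) auto
  then show "(\<Sum>k. 2 * pi * (norm (tc W k))\<^sup>2) \<le> C"
    by (rule suminf_le_const[OF _ part])
qed

lemma tc_unique:
  fixes c :: complex
  assumes hol: "W holomorphic_on ball 0 R" and r: "0 < r" "r < R"
    and I: "integral {0..2*pi} (\<lambda>t. W (of_real r * cis t) * cnj (cis t ^ k)) = 2 * pi * (c * of_real r ^ k)"
  shows "tc W k = c"
proof -
  have "2 * pi * (tc W k * of_real r ^ k) = 2 * pi * (c * of_real r ^ k)"
    using coef_formula[OF hol, of r k] r I by simp
  then show ?thesis using r by simp
qed

lemma dil_in_ball:
  assumes "0 \<le> sg" "sg \<le> 1" "z \<in> ball (0::complex) R"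
  shows "of_real sg * z \<in> ball 0 R"
proof -
  have "norm (of_real sg * z) = sg * norm z" using assms by (simp add: norm_mult)
  also have "\<dots> \<le> norm z" using assms by (simp add: mult_left_le_one_le)
  finally show ?thesis using assms by simp
qed

lemma tc_dil:
  assumes hol: "H holomorphic_on ball 0 R" and sg: "0 \<le> sg" "sg \<le> 1" and R: "0 < R"
  shows "tc (\<lambda>z. H (of_real sg * z)) k = tc H k * of_real sg ^ k"
proof -
  have hol2: "(\<lambda>z. H (of_real sg * z)) holomorphic_on ball 0 R"
  proof (rule holomorphic_on_compose_gen[where g = H and t = "ball 0 R", unfolded o_def])
    show "(\<lambda>z. of_real sg * z) holomorphic_on ball 0 R" by (intro holomorphic_intros)
    show "H holomorphic_on ball 0 R" by fact
    show "(\<lambda>z::complex. of_real sg * z) ` ball 0 R \<subseteq> ball 0 R"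
      by (rule image_subsetI) (rule dil_in_ball[OF sg])
  qed
  define r where "r = R / 2"
  have r: "0 < r" "r < R" using R by (auto simp: r_def)
  show ?thesis
  proof (rule tc_unique[OF hol2 r])
    have "integral {0..2*pi} (\<lambda>t. H (of_real sg * (of_real r * cis t)) * cnj (cis t ^ k))
        = integral {0..2*pi} (\<lambda>t. H (of_real (sg * r) * cis t) * cnj (cis t ^ k))"
      by (simp add: mult.assoc)
    also have "\<dots> = 2 * pi * (tc H k * of_real (sg * r) ^ k)"
      by (rule coef_formula[OF hol]) (use sg r in \<open>auto intro: le_less_trans[OF mult_left_le_one_le]\<close>)
    finally show "integral {0..2*pi} (\<lambda>t. H (of_real sg * (of_real r * cis t)) * cnj (cis t ^ k))
        = 2 * pi * (tc H k * of_real sg ^ k * of_real r ^ k)"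
      by (simp add: power_mult_distrib mult_ac)
  qed
qed

lemma tc_diff:
  assumes holF: "F holomorphic_on ball 0 R" and holG: "G holomorphic_on ball 0 R" and R: "0 < R"
  shows "tc (\<lambda>z. F z - G z) k = tc F k - tc G k"
proof -
  define r where "r = R / 2"
  have r: "0 < r" "r < R" using R by (auto simp: r_def)
  have hol: "(\<lambda>z. F z - G z) holomorphic_on ball 0 R" by (intro holomorphic_intros holF holG)
  show ?thesis
  proof (rule tc_unique[where W="\<lambda>z. F z - G z", OF hol r])
    have i1: "(\<lambda>t. F (of_real r * cis t) * cnj (cis t ^ k)) integrable_on {0..2*pi}"
      by (intro integrable_continuous_real continuous_intros cont_circ[OF holF]) (use r in auto)
    have i2: "(\<lambda>t. G (of_real r * cis t) * cnj (cis t ^ k)) integrable_on {0..2*pi}"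
      by (intro integrable_continuous_real continuous_intros cont_circ[OF holG]) (use r in auto)
    have "integral {0..2*pi} (\<lambda>t. (F (of_real r * cis t) - G (of_real r * cis t)) * cnj (cis t ^ k))
       = integral {0..2*pi} (\<lambda>t. F (of_real r * cis t) * cnj (cis t ^ k)) - integral {0..2*pi} (\<lambda>t. G (of_real r * cis t) * cnj (cis t ^ k))"
      using integral_diff[OF i1 i2] by (simp add: algebra_simps)
    also have "\<dots> = 2 * pi * (tc F k * of_real r ^ k) - 2 * pi * (tc G k * of_real r ^ k)"
      using coef_formula[OF holF, of r k] coef_formula[OF holG, of r k] r by simp
    finally show "integral {0..2*pi} (\<lambda>t. (F (of_real r * cis t) - G (of_real r * cis t)) * cnj (cis t ^ k))
        = 2 * pi * ((tc F k - tc G k) * of_real r ^ k)"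
      by (simp add: algebra_simps)
  qed
qed


lemma hol_dil:
  assumes hol: "H holomorphic_on ball 0 R" and sg: "0 \<le> sg" "sg \<le> 1"
  shows "(\<lambda>z. H (of_real sg * z)) holomorphic_on ball 0 R"
proof (rule holomorphic_on_compose_gen[where g = H and t = "ball 0 R", unfolded o_def])
  show "(\<lambda>z. of_real sg * z) holomorphic_on ball 0 R" by (intro holomorphic_intros)
  show "H holomorphic_on ball 0 R" by fact
  show "(\<lambda>z::complex. of_real sg * z) ` ball 0 R \<subseteq> ball 0 R"
    by (rule image_subsetI) (rule dil_in_ball[OF sg])
qed

lemma H2_dil_small:
  assumes hol: "H holomorphic_on ball 0 1" and summ: "summable (\<lambda>k. 2 * pi * (norm (tc H k))\<^sup>2)"
    and e: "e > 0"
  shows "\<exists>s0<1. \<forall>sg r. s0 < sg \<longrightarrow> sg < 1 \<longrightarrow> 0 \<le> r \<longrightarrow> r < 1 \<longrightarrow>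
     integral {0..2*pi} (\<lambda>t. (norm (H (of_real r * cis t) - H (of_real (sg * r) * cis t)))\<^sup>2) \<le> e"
proof -
  define a where "a = (\<lambda>k (sg::real). 2 * pi * (norm (tc H k))\<^sup>2 * (1 - sg ^ k)\<^sup>2)"
  have lim: "((\<lambda>sg. a k sg) \<longlongrightarrow> 0) (at_left 1)" for k
  proof -
    have "((\<lambda>sg. a k sg) \<longlongrightarrow> 2 * pi * (norm (tc H k))\<^sup>2 * (1 - 1 ^ k)\<^sup>2) (at_left 1)"
      unfolding a_def by (intro tendsto_intros)
    then show ?thesis by simp
  qed
  have abnd: "0 \<le> a k sg \<and> a k sg \<le> 2 * pi * (norm (tc H k))\<^sup>2" if "0 \<le> sg" "sg \<le> 1" for k sg
  proof -
    have "0 \<le> 1 - sg ^ k" "1 - sg ^ k \<le> 1" using that by (auto simp: power_le_one)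
    then have "(1 - sg ^ k)\<^sup>2 \<le> 1" by (simp add: power_le_one)
    from mult_left_le[OF this, of "2 * pi * (norm (tc H k))\<^sup>2"]
    have "a k sg \<le> 2 * pi * (norm (tc H k))\<^sup>2" by (simp add: a_def)
    moreover have "0 \<le> a k sg" by (simp add: a_def)
    ultimately show ?thesis by simp
  qed
  have bnd: "eventually (\<lambda>(k, sg). norm (a k sg) \<le> 2 * pi * (norm (tc H k))\<^sup>2) (at_top \<times>\<^sub>F at_left (1::real))"
    unfolding eventually_prod_filter
  proof (intro exI conjI allI impI)
    show "eventually (\<lambda>k::nat. True) at_top" by simp
    show "eventually (\<lambda>sg. 0 < sg \<and> sg < (1::real)) (at_left 1)"
      unfolding eventually_at_left_field by (rule exI[of _ 0]) auto
    fix k sg assume "0 < sg \<and> sg < (1::real)"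
    then have "0 \<le> a k sg \<and> a k sg \<le> 2 * pi * (norm (tc H k))\<^sup>2" using abnd by auto
    then show "case (k, sg) of (k, sg) \<Rightarrow> norm (a k sg) \<le> 2 * pi * (norm (tc H k))\<^sup>2"
      by simp
  qed
  have T: "((\<lambda>sg. \<Sum>k. a k sg) \<longlongrightarrow> (\<Sum>k. (0::real))) (at_left 1)"
    using tannerys_theorem[OF lim bnd summ] by simp
  then have "eventually (\<lambda>sg. (\<Sum>k. a k sg) < e) (at_left 1)"
    using e by (simp add: order_tendstoD(2))
  then obtain s0 where s0: "s0 < 1" "\<And>sg. s0 < sg \<Longrightarrow> sg < 1 \<Longrightarrow> (\<Sum>k. a k sg) < e"
    unfolding eventually_at_left_field by auto
  show ?thesis
  proof (intro exI[of _ "max 0 s0"] conjI allI impI)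
    show "max 0 s0 < 1" using s0 by simp
    fix sg r :: real assume sg: "max 0 s0 < sg" "sg < 1" and r: "0 \<le> r" "r < 1"
    define D where "D = (\<lambda>z. H z - H (of_real sg * z))"
    have holD: "D holomorphic_on ball 0 1"
      unfolding D_def by (intro holomorphic_intros hol hol_dil[OF hol]) (use sg in auto)
    have tcD: "tc D k = tc H k * (1 - of_real sg ^ k)" for k
      unfolding D_def using tc_diff[OF hol hol_dil[OF hol], of sg k] tc_dil[OF hol, of sg k] sg
      by (simp add: algebra_simps)
    have nD: "(norm (tc D k))\<^sup>2 = (norm (tc H k))\<^sup>2 * (1 - sg ^ k)\<^sup>2" for k
    proof -
      have "1 - of_real sg ^ k = (of_real (1 - sg ^ k) :: complex)" by simp
      then have "norm (1 - of_real sg ^ k :: complex) = 1 - sg ^ k"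
        using sg by (simp add: power_le_one del: of_real_diff of_real_power)
      then show ?thesis by (simp add: tcD norm_mult power_mult_distrib)
    qed
    have P: "(\<lambda>k. 2 * pi * ((norm (tc D k))\<^sup>2 * (r * r) ^ k)) sums
           integral {0..2*pi} (\<lambda>t. (norm (D (of_real r * cis t)))\<^sup>2)"
      by (rule parseval[OF holD]) (use r in auto)
    have Q: "(\<lambda>k. a k sg) sums (\<Sum>k. a k sg)"
      using abnd[of sg] sg
      by (intro summable_sums summable_comparison_test[OF _ summ]) (auto intro!: exI[of _ 0])
    have "integral {0..2*pi} (\<lambda>t. (norm (D (of_real r * cis t)))\<^sup>2) \<le> (\<Sum>k. a k sg)"
    proof (rule sums_le[OF _ P Q])
      fix k
      have "r * r \<le> 1" using r by (simp add: mult_le_one)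
      then have "(r * r) ^ k \<le> 1" using r by (intro power_le_one) auto
      from mult_left_le[OF this, of "a k sg"] abnd[of sg k] sg
      show "2 * pi * ((norm (tc D k))\<^sup>2 * (r * r) ^ k) \<le> a k sg"
        by (simp add: nD a_def mult_ac)
    qed
    also have "\<dots> \<le> e" using s0(2)[of sg] sg by simp
    finally show "integral {0..2*pi} (\<lambda>t. (norm (H (of_real r * cis t) - H (of_real (sg * r) * cis t)))\<^sup>2) \<le> e"
      by (simp add: D_def mult.assoc)
  qed
qed


lemma amgm_l:
  fixes l x y :: real
  assumes "0 < l"
  shows "x * y \<le> l / 2 * x\<^sup>2 + y\<^sup>2 / (2 * l)"
proof -
  have "0 \<le> (l * x - y)\<^sup>2" by simp
  then have "2 * l * (x * y) \<le> l\<^sup>2 * x\<^sup>2 + y\<^sup>2" by (simp add: power2_eq_square algebra_simps)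
  then have "x * y \<le> (l\<^sup>2 * x\<^sup>2 + y\<^sup>2) / (2 * l)" using assms by (simp add: field_simps)
  also have "\<dots> = l / 2 * x\<^sup>2 + y\<^sup>2 / (2 * l)" using assms by (simp add: field_simps power2_eq_square)
  finally show ?thesis .
qed

lemma hasint_circ:
  assumes "continuous_on {0..2*pi} (f :: real \<Rightarrow> real)"
  shows "(f has_integral integral {0..2*pi} f) {0..2*pi}"
  by (rule integrable_integral[OF integrable_continuous_real[OF assms]])

lemma R_from_fact:
  fixes phi p1 p2 :: "complex \<Rightarrow> complex"
  assumes hp: "phi holomorphic_on ball 0 1"
    and h1: "p1 holomorphic_on ball 0 1" and h2: "p2 holomorphic_on ball 0 1"
    and C1: "\<And>r. 0 \<le> r \<Longrightarrow> r < 1 \<Longrightarrow> integral {0..2*pi} (\<lambda>t. (norm (p1 (of_real r * cis t)))\<^sup>2) \<le> C"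
    and C2: "\<And>r. 0 \<le> r \<Longrightarrow> r < 1 \<Longrightarrow> integral {0..2*pi} (\<lambda>t. (norm (p2 (of_real r * cis t)))\<^sup>2) \<le> C"
    and eq: "\<And>z. z \<in> ball 0 1 \<Longrightarrow> phi z = p1 z * p2 z"
    and eta: "eta > 0"
  shows "\<exists>s0<1. \<forall>sg r. s0 < sg \<longrightarrow> sg < 1 \<longrightarrow> 0 \<le> r \<longrightarrow> r < 1 \<longrightarrow>
     integral {0..2*pi} (\<lambda>t. norm (phi (of_real r * cis t) - phi (of_real (sg * r) * cis t))) \<le> eta"
proof -
  have C0: "0 \<le> C"
  proof -
    have "0 \<le> integral {0..2*pi} (\<lambda>t. (norm (p1 (of_real 0 * cis t)))\<^sup>2)"
      by (intro integral_nonneg integrable_continuous_real continuous_intros cont_circ[OF h1]) auto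
    also have "\<dots> \<le> C" by (rule C1) auto
    finally show ?thesis .
  qed
  define l where "l = eta / (2 * (C + 1))"
  define e where "e = l * eta / 2"
  have l: "l > 0" using eta C0 by (simp add: l_def)
  have e: "e > 0" using l eta by (simp add: e_def)
  obtain s1 where s1: "s1 < 1" and s1': "\<And>sg r. s1 < sg \<Longrightarrow> sg < 1 \<Longrightarrow> 0 \<le> r \<Longrightarrow> r < 1 \<Longrightarrow>
     integral {0..2*pi} (\<lambda>t. (norm (p1 (of_real r * cis t) - p1 (of_real (sg * r) * cis t)))\<^sup>2) \<le> e"
    using H2_dil_small[OF h1 H2_summable(1)[OF h1 C1] e] by blast
  obtain s2 where s2: "s2 < 1" and s2': "\<And>sg r. s2 < sg \<Longrightarrow> sg < 1 \<Longrightarrow> 0 \<le> r \<Longrightarrow> r < 1 \<Longrightarrow>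
     integral {0..2*pi} (\<lambda>t. (norm (p2 (of_real r * cis t) - p2 (of_real (sg * r) * cis t)))\<^sup>2) \<le> e"
    using H2_dil_small[OF h2 H2_summable(1)[OF h2 C2] e] by blast
  show ?thesis
  proof (intro exI[of _ "max 0 (max s1 s2)"] conjI allI impI)
    show "max 0 (max s1 s2) < 1" using s1 s2 by simp
    fix sg r :: real assume sg: "max 0 (max s1 s2) < sg" "sg < 1" and r: "0 \<le> r" "r < 1"
    have sr: "0 \<le> sg * r" "sg * r < 1" using sg r by (auto intro: le_less_trans[OF mult_left_le_one_le])
    define A where "A = (\<lambda>t. p1 (of_real r * cis t))"
    define A' where "A' = (\<lambda>t. p1 (of_real (sg * r) * cis t))"
    define B where "B = (\<lambda>t. p2 (of_real r * cis t))"
    define B' where "B' = (\<lambda>t. p2 (of_real (sg * r) * cis t))"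
    have cA: "continuous_on {0..2*pi} A" unfolding A_def by (rule cont_circ[OF h1]) (use r in auto)
    have cA': "continuous_on {0..2*pi} A'" unfolding A'_def by (rule cont_circ[OF h1]) (use sr in auto)
    have cB: "continuous_on {0..2*pi} B" unfolding B_def by (rule cont_circ[OF h2]) (use r in auto)
    have cB': "continuous_on {0..2*pi} B'" unfolding B'_def by (rule cont_circ[OF h2]) (use sr in auto)
    have cP: "continuous_on {0..2*pi} (\<lambda>t. norm (phi (of_real r * cis t) - phi (of_real (sg * r) * cis t)))"
      by (intro continuous_intros cont_circ[OF hp]) (use r sr in auto)
    define g where "g = (\<lambda>t. l / 2 * (norm (A t))\<^sup>2 + (norm (B t - B' t))\<^sup>2 / (2 * l)
                          + (l / 2 * (norm (B' t))\<^sup>2 + (norm (A t - A' t))\<^sup>2 / (2 * l)))"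
    have pw: "norm (phi (of_real r * cis t) - phi (of_real (sg * r) * cis t)) \<le> g t" for t
    proof -
      have "phi (of_real r * cis t) - phi (of_real (sg * r) * cis t) = A t * B t - A' t * B' t"
        unfolding A_def B_def A'_def B'_def using r sr by (simp add: eq norm_mult)
      also have "\<dots> = A t * (B t - B' t) + (A t - A' t) * B' t" by (simp add: algebra_simps)
      finally have "norm (phi (of_real r * cis t) - phi (of_real (sg * r) * cis t))
          \<le> norm (A t) * norm (B t - B' t) + norm (B' t) * norm (A t - A' t)"
        by (metis norm_triangle_ineq norm_mult mult.commute)
      also have "\<dots> \<le> g t" unfolding g_def
        by (intro add_mono amgm_l l)
      finally show ?thesis .
    qed
    have iA: "integral {0..2*pi} (\<lambda>t. (norm (A t))\<^sup>2) \<le> C" unfolding A_def by (rule C1[OF r])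
    have iB': "integral {0..2*pi} (\<lambda>t. (norm (B' t))\<^sup>2) \<le> C" unfolding B'_def by (rule C2[OF sr])
    have iBB: "integral {0..2*pi} (\<lambda>t. (norm (B t - B' t))\<^sup>2) \<le> e"
      unfolding B_def B'_def by (rule s2') (use sg r in auto)
    have iAA: "integral {0..2*pi} (\<lambda>t. (norm (A t - A' t))\<^sup>2) \<le> e"
      unfolding A_def A'_def by (rule s1') (use sg r in auto)
    have hg: "(g has_integral
        (l / 2 * integral {0..2*pi} (\<lambda>t. (norm (A t))\<^sup>2) + integral {0..2*pi} (\<lambda>t. (norm (B t - B' t))\<^sup>2) / (2 * l)
         + (l / 2 * integral {0..2*pi} (\<lambda>t. (norm (B' t))\<^sup>2) + integral {0..2*pi} (\<lambda>t. (norm (A t - A' t))\<^sup>2) / (2 * l))))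
        {0..2*pi}"
      unfolding g_def
      by (intro has_integral_add has_integral_mult_right has_integral_divide hasint_circ continuous_intros cA cA' cB cB')
    have "integral {0..2*pi} (\<lambda>t. norm (phi (of_real r * cis t) - phi (of_real (sg * r) * cis t))) \<le> integral {0..2*pi} g"
      by (rule integral_le[OF integrable_continuous_real[OF cP]]) (use hg pw in auto)
    also have "\<dots> \<le> l / 2 * C + e / (2 * l) + (l / 2 * C + e / (2 * l))"
      unfolding integral_unique[OF hg] using l
      by (intro add_mono mult_left_mono divide_right_mono iA iB' iBB iAA) auto
    also have "\<dots> = l * C + eta / 2" using l by (simp add: e_def field_simps)
    also have "\<dots> \<le> eta" using C0 eta by (simp add: l_def field_simps)
    finally show "integral {0..2*pi} (\<lambda>t. norm (phi (of_real r * cis t) - phi (of_real (sg * r) * cis t))) \<le> eta" .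
  qed
qed


definition bf :: "complex \<Rightarrow> complex \<Rightarrow> complex" where
  "bf a z = (z - a) / (1 - cnj a * z)"

lemma bf_identity:
  "(norm (1 - cnj a * z))\<^sup>2 - (norm (z - a))\<^sup>2 = (1 - (norm a)\<^sup>2) * (1 - (norm z)\<^sup>2)"
proof -
  have "complex_of_real ((norm (1 - cnj a * z))\<^sup>2 - (norm (z - a))\<^sup>2)
      = (1 - cnj a * z) * cnj (1 - cnj a * z) - (z - a) * cnj (z - a)"
    by (simp only: of_real_diff complex_norm_square)
  also have "\<dots> = (1 - a * cnj a) * (1 - z * cnj z)" by (simp add: algebra_simps)
  also have "\<dots> = complex_of_real ((1 - (norm a)\<^sup>2) * (1 - (norm z)\<^sup>2))"
    by (simp only: of_real_diff of_real_mult complex_norm_square of_real_1)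
  finally show ?thesis by (simp only: of_real_eq_iff)
qed

lemma bf_denom_nz:
  assumes "norm a < 1" "norm z \<le> 1"
  shows "1 - cnj a * z \<noteq> 0"
proof
  assume "1 - cnj a * z = 0"
  then have "cnj a * z = 1" by simp
  then have "norm a * norm z = 1" by (metis complex_mod_cnj norm_mult norm_one)
  moreover have "norm a * norm z < 1"
    using assms by (metis le_less_trans mult_left_le norm_ge_zero)
  ultimately show False by simp
qed

lemma bf_le1:
  assumes "norm a < 1" "norm z \<le> 1"
  shows "norm (bf a z) \<le> 1"
proof -
  have d: "1 - cnj a * z \<noteq> 0" by (rule bf_denom_nz[OF assms])
  have "0 \<le> (1 - (norm a)\<^sup>2) * (1 - (norm z)\<^sup>2)"
    using assms by (intro mult_nonneg_nonneg) (auto simp: power_le_one abs_square_le_1)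
  then have "(norm (z - a))\<^sup>2 \<le> (norm (1 - cnj a * z))\<^sup>2" using bf_identity[of a z] by linarith
  then have "norm (z - a) \<le> norm (1 - cnj a * z)" by (rule power2_le_imp_le) simp
  then show ?thesis using d by (simp add: bf_def norm_divide divide_le_eq_1)
qed

lemma bf_eq1:
  assumes "norm a < 1" "norm z = 1"
  shows "norm (bf a z) = 1"
proof -
  have d: "1 - cnj a * z \<noteq> 0" by (rule bf_denom_nz) (use assms in auto)
  have "(norm (z - a))\<^sup>2 = (norm (1 - cnj a * z))\<^sup>2" using bf_identity[of a z] assms by simp
  then have "norm (z - a) = norm (1 - cnj a * z)" by (simp add: power2_eq_iff_nonneg)
  then show ?thesis using d by (simp add: bf_def norm_divide)
qed

lemma bf_holo:
  assumes "norm a < 1"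
  shows "bf a holomorphic_on ball 0 (1 / norm a)"
proof -
  have "1 - cnj a * z \<noteq> 0" if "z \<in> ball 0 (1 / norm a)" for z
  proof
    assume "1 - cnj a * z = 0"
    then have "norm a * norm z = 1" by (metis complex_mod_cnj norm_mult norm_one eq_iff_diff_eq_0)
    moreover have "norm a * norm z < 1"
    proof (cases "a = 0")
      case True then show ?thesis by simp
    next
      case False
      then have "norm z < 1 / norm a" using that by simp
      then show ?thesis using False by (simp add: field_simps)
    qed
    ultimately show False by simp
  qed
  then show ?thesis unfolding bf_def by (intro holomorphic_intros) auto
qed

lemma bf_holo0: "bf 0 holomorphic_on UNIV"
  unfolding bf_def by (intro holomorphic_intros) auto

lemma mean_value_bound:
  assumes hol: "F holomorphic_on ball 0 R" and R: "1 < R"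
  shows "norm (F 0) \<le> integral {0..2*pi} (\<lambda>t. norm (F (cis t))) / (2 * pi)"
proof -
  have "integral {0..2*pi} (\<lambda>t. F (of_real 1 * cis t) * cnj (cis t ^ 0)) = 2 * pi * (tc F 0 * of_real 1 ^ 0)"
    by (rule coef_formula[OF hol]) (use R in auto)
  then have I: "integral {0..2*pi} (\<lambda>t. F (cis t)) = 2 * pi * F 0" by (simp add: tc_def)
  have c: "continuous_on {0..2*pi} (\<lambda>t. F (cis t))"
    using cont_circ[OF hol, of 1] R by simp
  have "norm (integral {0..2*pi} (\<lambda>t. F (cis t))) \<le> integral {0..2*pi} (\<lambda>t. norm (F (cis t)))"
    by (rule integral_norm_bound_integral) (auto intro!: integrable_continuous_real continuous_intros c)
  then show ?thesis using I by (simp add: norm_mult field_simps)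
qed

lemma zeros_compact:
  fixes F :: "complex \<Rightarrow> complex"
  assumes "continuous_on K F" "compact K"
  shows "compact {z \<in> K. F z = 0}"
proof -
  have "closed {z \<in> K. F z = 0}"
    by (rule continuous_closed_preimage_constant[OF assms(1) compact_imp_closed[OF assms(2)]])
  then have "compact ({z \<in> K. F z = 0} \<inter> K)" using assms(2) by blast
  moreover have "{z \<in> K. F z = 0} \<inter> K = {z \<in> K. F z = 0}" by blast
  ultimately show ?thesis by simp
qed

lemma zero_free_nbhd:
  fixes F :: "complex \<Rightarrow> complex"
  assumes hol: "F holomorphic_on ball 0 R" and R: "1 < R"
    and nz: "\<And>z. norm z \<le> 1 \<Longrightarrow> F z \<noteq> 0"
  obtains R' where "1 < R'" "R' \<le> R" "\<And>z. z \<in> ball 0 R' \<Longrightarrow> F z \<noteq> 0"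
proof -
  define R2 where "R2 = (1 + R) / 2"
  have R2: "1 < R2" "R2 < R" using R by (auto simp: R2_def)
  have cont: "continuous_on (cball 0 R2) F"
    by (rule holomorphic_on_imp_continuous_on[OF holomorphic_on_subset[OF hol]]) (use R2 in auto)
  define Z where "Z = {z \<in> cball 0 R2. F z = 0}"
  have cZ: "compact Z" unfolding Z_def by (rule zeros_compact[OF cont compact_cball])
  show ?thesis
  proof (cases "Z = {}")
    case True
    show ?thesis
    proof (rule that[of R2])
      show "1 < R2" "R2 \<le> R" using R2 by auto
      show "F z \<noteq> 0" if "z \<in> ball 0 R2" for z using True that by (auto simp: Z_def)
    qed
  next
    case False
    obtain z0 where z0: "z0 \<in> Z" "\<And>z. z \<in> Z \<Longrightarrow> norm z0 \<le> norm z"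
      using continuous_attains_inf[OF cZ False, of norm] by (auto intro: continuous_intros)
    have "norm z0 > 1" using z0(1) nz by (force simp: Z_def)
    show ?thesis
    proof (rule that[of "min R2 (norm z0)"])
      show "1 < min R2 (norm z0)" using R2 \<open>norm z0 > 1\<close> by simp
      show "min R2 (norm z0) \<le> R" using R2 by simp
      show "F z \<noteq> 0" if "z \<in> ball 0 (min R2 (norm z0))" for z
      proof
        assume "F z = 0"
        then have "z \<in> Z" using that by (auto simp: Z_def)
        then show False using z0(2)[of z] that by simp
      qed
    qed
  qed
qed


lemma denom_nz_gen:
  assumes "norm a * norm z < 1"
  shows "1 - cnj a * z \<noteq> 0"
proof
  assume "1 - cnj a * z = 0"
  then have "cnj a * z = 1" by simp
  then have "norm a * norm z = 1" by (metis complex_mod_cnj norm_mult norm_one)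
  then show False using assms by simp
qed

definition fact_concl :: "(complex \<Rightarrow> complex) \<Rightarrow> bool" where
  "fact_concl F \<longleftrightarrow> (\<exists>B G R'. 1 < R' \<and> B holomorphic_on ball 0 R' \<and> G holomorphic_on ball 0 R' \<and>
      (\<forall>z\<in>ball 0 R'. F z = B z * (G z)\<^sup>2) \<and> (\<forall>z. norm z \<le> 1 \<longrightarrow> norm (B z) \<le> 1) \<and>
      (\<forall>z. norm z = 1 \<longrightarrow> norm (B z) = 1))"

lemma base_fact:
  assumes hol: "F holomorphic_on ball 0 R" and R: "1 < R"
    and nz: "\<And>z. norm z \<le> 1 \<Longrightarrow> F z \<noteq> 0"
  shows "fact_concl F"
proof -
  obtain R' where R': "1 < R'" "R' \<le> R" and nz': "\<And>z. z \<in> ball 0 R' \<Longrightarrow> F z \<noteq> 0"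
    using zero_free_nbhd[OF hol R nz] by blast
  have hol': "F holomorphic_on ball 0 R'"
    by (rule holomorphic_on_subset[OF hol]) (use R' in auto)
  obtain G where G: "G holomorphic_on ball 0 R'" "\<And>z. z \<in> ball 0 R' \<Longrightarrow> F z = G z ^ 2"
    using contractible_imp_holomorphic_sqrt[OF hol' convex_imp_contractible[OF convex_ball] nz'] by blast
  show ?thesis unfolding fact_concl_def
    by (rule exI[of _ "\<lambda>z. 1"], rule exI[of _ G], rule exI[of _ R']) (use R' G in auto)
qed

lemma step_fact:
  assumes hol: "F holomorphic_on ball 0 R" and R: "1 < R"
    and a: "F a = 0" "norm a < 1"
    and F1_def: "F1 = (\<lambda>z. (if z = a then deriv F a else F z / (z - a)) * (1 - cnj a * z))"
  shows "F1 holomorphic_on ball 0 R"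
    and "\<And>z. 1 - cnj a * z \<noteq> 0 \<Longrightarrow> F z = bf a z * F1 z"
    and "a \<noteq> 0 \<Longrightarrow> F1 0 = - F 0 / a"
    and "\<And>t. norm (F1 (cis t)) = norm (F (cis t))"
proof -
  have ai: "a \<in> interior (ball 0 R)" using a R by simp
  have "(\<lambda>z. if z = a then deriv F a else (F z - F a) / (z - a)) holomorphic_on ball 0 R"
    by (rule pole_lemma[OF hol ai])
  moreover have "(\<lambda>z. if z = a then deriv F a else (F z - F a) / (z - a)) = (\<lambda>z. if z = a then deriv F a else F z / (z - a))"
    using a(1) by (intro ext) simp
  ultimately have "(\<lambda>z. if z = a then deriv F a else F z / (z - a)) holomorphic_on ball 0 R"
    by simp
  then show "F1 holomorphic_on ball 0 R" unfolding F1_def by (intro holomorphic_intros)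
  show eq: "F z = bf a z * F1 z" if d: "1 - cnj a * z \<noteq> 0" for z
  proof (cases "z = a")
    case True then show ?thesis using a by (simp add: bf_def)
  next
    case False
    have aux: "u / d * (w / u * d) = w" if "u \<noteq> 0" "d \<noteq> 0" for u d w :: complex
      using that by (simp add: field_simps)
    have "bf a z * F1 z = (z - a) / (1 - cnj a * z) * (F z / (z - a) * (1 - cnj a * z))"
      using False by (simp add: bf_def F1_def)
    also have "\<dots> = F z" by (rule aux) (use False d in auto)
    finally show ?thesis by simp
  qed
  show "a \<noteq> 0 \<Longrightarrow> F1 0 = - F 0 / a" by (simp add: F1_def)
  show "norm (F1 (cis t)) = norm (F (cis t))" for t
  proof -
    have d: "1 - cnj a * cis t \<noteq> 0" by (rule bf_denom_nz) (use a in auto)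
    have "norm (F (cis t)) = norm (bf a (cis t)) * norm (F1 (cis t))" by (simp add: eq[OF d] norm_mult)
    also have "norm (bf a (cis t)) = 1" by (rule bf_eq1) (use a in auto)
    finally show ?thesis by simp
  qed
qed

lemma finfact_ind:
  assumes rho: "0 < rho" "rho < 1"
  shows "1 < R \<Longrightarrow> F holomorphic_on ball 0 R \<Longrightarrow> F 0 \<noteq> 0 \<Longrightarrow>
    (\<forall>z. norm z \<le> 1 \<longrightarrow> F z = 0 \<longrightarrow> norm z \<le> rho) \<Longrightarrow>
    integral {0..2*pi} (\<lambda>t. norm (F (cis t))) < 2 * pi * norm (F 0) / rho ^ n \<Longrightarrow> fact_concl F"
proof (induction n arbitrary: F R)
  case 0
  show ?case
  proof (cases "\<forall>z. norm z \<le> 1 \<longrightarrow> F z \<noteq> 0")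
    case True then show ?thesis using base_fact[OF "0.prems"(2,1)] by blast
  next
    case False
    have "norm (F 0) \<le> integral {0..2*pi} (\<lambda>t. norm (F (cis t))) / (2 * pi)"
      by (rule mean_value_bound[OF "0.prems"(2,1)])
    then have "2 * pi * norm (F 0) \<le> integral {0..2*pi} (\<lambda>t. norm (F (cis t)))"
      by (simp add: field_simps)
    then show ?thesis using "0.prems"(5) by simp
  qed
next
  case (Suc n)
  note hol = Suc.prems(2) and R = Suc.prems(1) and F0 = Suc.prems(3) and Z = Suc.prems(4)
  show ?case
  proof (cases "\<forall>z. norm z \<le> 1 \<longrightarrow> F z \<noteq> 0")
    case True then show ?thesis using base_fact[OF hol R] by blast
  next
    case False
    then obtain a where a: "norm a \<le> 1" "F a = 0" by blast
    have ar: "norm a \<le> rho" using Z a by blast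
    have a1: "norm a < 1" using ar rho by simp
    have a0: "a \<noteq> 0" using a F0 by auto
    define F1 where "F1 = (\<lambda>z. (if z = a then deriv F a else F z / (z - a)) * (1 - cnj a * z))"
    note S = step_fact[OF hol R a(2) a1 F1_def]
    have F10: "F1 0 \<noteq> 0" using S(3)[OF a0] F0 a0 by simp
    have nF10: "norm (F1 0) = norm (F 0) / norm a" using S(3)[OF a0] by (simp add: norm_divide)
    have Z1: "\<forall>z. norm z \<le> 1 \<longrightarrow> F1 z = 0 \<longrightarrow> norm z \<le> rho"
    proof (intro allI impI)
      fix z assume z: "norm z \<le> 1" "F1 z = 0"
      have "1 - cnj a * z \<noteq> 0" by (rule bf_denom_nz[OF a1 z(1)])
      then have "F z = 0" using S(2) z by simp
      then show "norm z \<le> rho" using Z z by blast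
    qed
    have I: "integral {0..2*pi} (\<lambda>t. norm (F1 (cis t))) = integral {0..2*pi} (\<lambda>t. norm (F (cis t)))"
      using S(4) by simp
    have "2 * pi * norm (F 0) / rho ^ Suc n = 2 * pi * (norm (F 0) / rho) / rho ^ n"
      by simp
    also have "\<dots> \<le> 2 * pi * norm (F1 0) / rho ^ n"
    proof -
      have "norm (F 0) / rho \<le> norm (F 0) / norm a"
        using ar a0 rho by (intro divide_left_mono) auto
      then show ?thesis unfolding nF10 using rho by (intro divide_right_mono mult_left_mono) auto
    qed
    finally have "integral {0..2*pi} (\<lambda>t. norm (F1 (cis t))) < 2 * pi * norm (F1 0) / rho ^ n"
      using Suc.prems(5) I by simp
    then have "fact_concl F1" using Suc.IH[OF R S(1) F10 Z1] by blast
    then obtain B1 G1 R1 where R1: "1 < R1" and hB1: "B1 holomorphic_on ball 0 R1"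
      and hG1: "G1 holomorphic_on ball 0 R1" and e1: "\<forall>z\<in>ball 0 R1. F1 z = B1 z * (G1 z)\<^sup>2"
      and b1: "\<forall>z. norm z \<le> 1 \<longrightarrow> norm (B1 z) \<le> 1" and b1': "\<forall>z. norm z = 1 \<longrightarrow> norm (B1 z) = 1"
      unfolding fact_concl_def by blast
    define R' where "R' = min R1 (1 / norm a)"
    have R': "1 < R'" using R1 a1 a0 by (simp add: R'_def field_simps)
    show ?thesis unfolding fact_concl_def
    proof (intro exI conjI)
      show "1 < R'" by fact
      show "(\<lambda>z. bf a z * B1 z) holomorphic_on ball 0 R'"
        by (intro holomorphic_intros holomorphic_on_subset[OF bf_holo[OF a1]] holomorphic_on_subset[OF hB1])
           (auto simp: R'_def)
      show "G1 holomorphic_on ball 0 R'" by (rule holomorphic_on_subset[OF hG1]) (auto simp: R'_def)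
      show "\<forall>z\<in>ball 0 R'. F z = bf a z * B1 z * (G1 z)\<^sup>2"
      proof
        fix z :: complex assume z: "z \<in> ball 0 R'"
        have "norm z < 1 / norm a" using z by (simp add: R'_def)
        then have "norm a * norm z < 1" using a0 by (simp add: field_simps)
        then have "1 - cnj a * z \<noteq> 0" by (rule denom_nz_gen)
        then have "F z = bf a z * F1 z" by (rule S(2))
        also have "F1 z = B1 z * (G1 z)\<^sup>2" using e1 z by (simp add: R'_def)
        finally show "F z = bf a z * B1 z * (G1 z)\<^sup>2" by (simp add: mult.assoc)
      qed
      show "\<forall>z. norm z \<le> 1 \<longrightarrow> norm (bf a z * B1 z) \<le> 1"
        using bf_le1[OF a1] b1 by (simp add: norm_mult mult_le_one)
      show "\<forall>z. norm z = 1 \<longrightarrow> norm (bf a z * B1 z) = 1"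
        using bf_eq1[OF a1] b1' by (simp add: norm_mult)
    qed
  qed
qed

lemma finfact:
  assumes hol: "F holomorphic_on ball 0 R" and R: "1 < R" and F0: "F 0 \<noteq> 0"
    and nzs: "\<And>z. norm z = 1 \<Longrightarrow> F z \<noteq> 0"
  shows "fact_concl F"
proof -
  have cont: "continuous_on (cball 0 1) F"
    by (rule holomorphic_on_imp_continuous_on[OF holomorphic_on_subset[OF hol]]) (use R in auto)
  define Z where "Z = {z \<in> cball 0 1. F z = 0}"
  have cZ: "compact Z" unfolding Z_def by (rule zeros_compact[OF cont compact_cball])
  obtain rho where rho: "0 < rho" "rho < 1" and Zr: "\<forall>z. norm z \<le> 1 \<longrightarrow> F z = 0 \<longrightarrow> norm z \<le> rho"
  proof (cases "Z = {}")
    case True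
    show ?thesis by (rule that[of "1/2"]) (use True in \<open>auto simp: Z_def\<close>)
  next
    case False
    obtain z0 where z0: "z0 \<in> Z" "\<And>z. z \<in> Z \<Longrightarrow> norm z \<le> norm z0"
      using continuous_attains_sup[OF cZ False, of norm] by (auto intro: continuous_intros)
    have "norm z0 < 1" using z0(1) nzs by (force simp: Z_def le_less)
    show ?thesis
    proof (rule that[of "max (1/2) (norm z0)"])
      show "0 < max (1/2) (norm z0)" "max (1/2) (norm z0) < 1" using \<open>norm z0 < 1\<close> by auto
      show "\<forall>z. norm z \<le> 1 \<longrightarrow> F z = 0 \<longrightarrow> norm z \<le> max (1/2) (norm z0)"
      proof (intro allI impI)
        fix z assume "norm z \<le> 1" "F z = 0"
        then have "z \<in> Z" by (simp add: Z_def)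
        then have "norm z \<le> norm z0" by (rule z0(2))
        then show "norm z \<le> max (1/2) (norm z0)" by simp
      qed
    qed
  qed
  obtain n where n: "integral {0..2*pi} (\<lambda>t. norm (F (cis t))) / (2 * pi * norm (F 0)) < (1 / rho) ^ n"
    using real_arch_pow[of "1 / rho"] rho by auto
  then have "integral {0..2*pi} (\<lambda>t. norm (F (cis t))) < 2 * pi * norm (F 0) / rho ^ n"
    using F0 rho by (simp add: field_simps power_divide)
  then show ?thesis by (rule finfact_ind[OF rho R hol F0 Zr])
qed


lemma unif_int_conv:
  fixes f :: "nat \<Rightarrow> real \<Rightarrow> 'b::banach"
  assumes c: "\<And>n. continuous_on {0..2*pi} (f n)" and u: "uniform_limit {0..2*pi} f g sequentially"
  shows "(\<lambda>n. integral {0..2*pi} (f n)) \<longlonglongrightarrow> integral {0..2*pi} g"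
proof -
  obtain I J where I: "\<And>n. (f n has_integral I n) {0..2*pi}" and J: "(g has_integral J) {0..2*pi}"
    and IJ: "I \<longlonglongrightarrow> J"
    using uniform_limit_integral[OF u c] by auto
  have "(\<lambda>n. integral {0..2*pi} (f n)) = I" using I by (auto simp: integral_unique)
  moreover have "integral {0..2*pi} g = J" using J by (rule integral_unique)
  ultimately show ?thesis using IJ by simp
qed

lemma tc_sq_bound:
  assumes hol: "G holomorphic_on ball 0 R" and R: "1 < R"
  shows "2 * pi * (norm (tc G k))\<^sup>2 \<le> integral {0..2*pi} (\<lambda>t. (norm (G (cis t)))\<^sup>2)"
proof -
  have S: "(\<lambda>k. 2 * pi * ((norm (tc G k))\<^sup>2 * (1 * 1) ^ k)) sums
           integral {0..2*pi} (\<lambda>t. (norm (G (of_real 1 * cis t)))\<^sup>2)"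
    by (rule parseval[OF hol]) (use R in auto)
  then have S': "(\<lambda>k. 2 * pi * (norm (tc G k))\<^sup>2) sums integral {0..2*pi} (\<lambda>t. (norm (G (cis t)))\<^sup>2)"
    by simp
  have "(\<Sum>j\<in>{k}. 2 * pi * (norm (tc G j))\<^sup>2) \<le> (\<Sum>j. 2 * pi * (norm (tc G j))\<^sup>2)"
    by (rule sum_le_suminf[OF sums_summable[OF S']]) auto
  then show ?thesis using sums_unique[OF S'] by simp
qed

lemma sup_bound_H2:
  assumes hol: "G holomorphic_on ball 0 R" and R: "1 < R"
    and C: "integral {0..2*pi} (\<lambda>t. (norm (G (cis t)))\<^sup>2) \<le> C0" and z: "norm z < 1"
  shows "norm (G z) \<le> sqrt (C0 / (2 * pi)) / (1 - norm z)"
proof -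
  define K where "K = sqrt (C0 / (2 * pi))"
  have tk: "norm (tc G k) \<le> K" for k
  proof -
    have "(norm (tc G k))\<^sup>2 \<le> C0 / (2 * pi)"
      using tc_sq_bound[OF hol R, of k] C by (simp add: field_simps)
    then show ?thesis unfolding K_def by (simp add: real_le_rsqrt)
  qed
  have K0: "0 \<le> K" using tk[of 0] norm_ge_zero order_trans by blast
  have Sz: "(\<lambda>k. tc G k * z ^ k) sums G z" by (rule tc_sums[OF hol]) (use z R in auto)
  have le: "norm (tc G k * z ^ k) \<le> K * norm z ^ k" for k
    using tk[of k] by (simp add: norm_mult norm_power mult_right_mono)
  have sg: "summable (\<lambda>k. K * norm z ^ k)" using z by (intro summable_mult summable_geometric) simp
  have sn: "summable (\<lambda>k. norm (tc G k * z ^ k))"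
    by (rule summable_comparison_test[OF _ sg]) (use le in auto)
  have "norm (G z) = norm (\<Sum>k. tc G k * z ^ k)" using sums_unique[OF Sz] by simp
  also have "\<dots> \<le> (\<Sum>k. norm (tc G k * z ^ k))" by (rule summable_norm[OF sn])
  also have "\<dots> \<le> (\<Sum>k. K * norm z ^ k)" by (rule suminf_le[OF le sn sg])
  also have "\<dots> = K / (1 - norm z)" using z by (simp add: suminf_mult suminf_geometric)
  finally show ?thesis unfolding K_def .
qed

lemma choose_s:
  fixes psi :: "complex \<Rightarrow> complex"
  assumes hol: "psi holomorphic_on ball 0 1"
    and nc: "\<not> psi constant_on ball 0 1 \<or> (\<forall>z\<in>ball 0 1. psi z \<noteq> 0)"
    and a: "0 \<le> a" "a < 1"
  obtains s where "a < s" "s < 1" "\<And>z. norm z = s \<Longrightarrow> psi z \<noteq> 0"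
proof -
  define T where "T = (a + 1) / 2"
  have T: "a < T" "T < 1" using a by (auto simp: T_def)
  define Zs where "Zs = {z \<in> cball 0 T. psi z = 0}"
  have fin: "finite Zs"
  proof (cases "\<forall>z\<in>ball 0 1. psi z \<noteq> 0")
    case True
    then have "Zs = {}" using T by (auto simp: Zs_def)
    then show ?thesis by simp
  next
    case False
    then have "\<not> psi constant_on ball 0 1" using nc by blast
    then show ?thesis unfolding Zs_def
      by (intro holomorphic_compact_finite_zeros[OF hol]) (use T in auto)
  qed
  have "infinite {a<..<T}" using T by simp
  then have "{a<..<T} - norm ` Zs \<noteq> {}"
    using fin by (metis finite_Diff2 finite_imageI finite.emptyI)
  then obtain s where s: "s \<in> {a<..<T}" "s \<notin> norm ` Zs" by blast
  show ?thesis
  proof (rule that[of s])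
    show "a < s" "s < 1" using s T by auto
    show "psi z \<noteq> 0" if "norm z = s" for z
    proof
      assume "psi z = 0"
      then have "z \<in> Zs" using that s by (auto simp: Zs_def)
      then show False using s that by auto
    qed
  qed
qed

lemma factor_power:
  fixes phi :: "complex \<Rightarrow> complex"
  assumes hol: "phi holomorphic_on ball 0 1" and nc: "\<not> phi constant_on ball 0 1"
  obtains m psi where "psi holomorphic_on ball 0 1" "psi 0 \<noteq> 0" "\<And>z. z \<in> ball 0 1 \<Longrightarrow> phi z = z ^ m * psi z"
proof (cases "phi 0 = 0")
  case False
  show ?thesis by (rule that[of phi 0]) (use hol False in auto)
next
  case True
  obtain g r n where n: "0 < n" and r: "0 < r" "ball 0 r \<subseteq> ball (0::complex) 1"
    and hg: "g holomorphic_on ball 0 r" and eq: "\<And>w. w \<in> ball 0 r \<Longrightarrow> phi w = (w - 0) ^ n * g w"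
    and gnz: "\<And>w. w \<in> ball 0 r \<Longrightarrow> g w \<noteq> 0"
    using holomorphic_factor_zero_nonconstant[OF hol open_ball connected_ball _ True nc] by (metis centre_in_ball zero_less_one)
  define psi where "psi = (\<lambda>z. if z = 0 then g 0 else phi z / z ^ n)"
  have h1: "psi holomorphic_on ball 0 r"
  proof (rule holomorphic_transform[OF hg])
    fix x :: complex assume x: "x \<in> ball 0 r"
    show "g x = psi x"
    proof (cases "x = 0")
      case True then show ?thesis by (simp add: psi_def)
    next
      case False then show ?thesis using eq[OF x] by (simp add: psi_def)
    qed
  qed
  have h2: "psi holomorphic_on (ball 0 1 - {0})"
  proof (rule holomorphic_transform[of "\<lambda>z. phi z / z ^ n"])
    show "(\<lambda>z. phi z / z ^ n) holomorphic_on ball 0 1 - {0}"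
      by (intro holomorphic_intros holomorphic_on_subset[OF hol]) auto
    show "phi x / x ^ n = psi x" if "x \<in> ball 0 1 - {0}" for x using that by (simp add: psi_def)
  qed
  have "ball 0 1 = ball 0 r \<union> (ball 0 1 - {0::complex})" using r by auto
  then have hp: "psi holomorphic_on ball 0 1"
    using holomorphic_on_Un[OF h1 h2] by auto
  show ?thesis
  proof (rule that[OF hp])
    show "psi 0 \<noteq> 0" using gnz[of 0] r by (simp add: psi_def)
    show "phi z = z ^ n * psi z" if "z \<in> ball 0 1" for z
    proof (cases "z = 0")
      case True then show ?thesis using eq[of 0] r n by (simp add: psi_def True)
    next
      case False then show ?thesis by (simp add: psi_def)
    qed
  qed
qed


lemma compact_in_ball1:
  fixes K :: "complex set"
  assumes "compact K" "K \<subseteq> ball 0 1"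
  obtains rho where "0 \<le> rho" "rho < 1" "\<And>z. z \<in> K \<Longrightarrow> norm z \<le> rho"
proof (cases "K = {}")
  case True then show ?thesis using that[of 0] by auto
next
  case False
  obtain z0 where z0: "z0 \<in> K" "\<And>z. z \<in> K \<Longrightarrow> norm z \<le> norm z0"
    using continuous_attains_sup[OF assms(1) False, of norm] by (auto intro: continuous_intros)
  show ?thesis by (rule that[of "norm z0"]) (use z0 assms(2) in auto)
qed

lemma integral_div_const:
  fixes f :: "real \<Rightarrow> real"
  shows "integral S (\<lambda>t. f t / c) = integral S f / c"
proof -
  have "(\<lambda>t. f t / c) = (\<lambda>t. (1 / c) *\<^sub>R f t)" by (simp add: field_simps)
  then show ?thesis by simp
qed

lemma seq_fact:
  fixes phi psi :: "complex \<Rightarrow> complex"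
  assumes hpsi: "psi holomorphic_on ball 0 1" and psi0: "psi 0 \<noteq> 0"
    and nc: "\<not> psi constant_on ball 0 1 \<or> (\<forall>z\<in>ball 0 1. psi z \<noteq> 0)"
    and eqp: "\<And>z. z \<in> ball 0 1 \<Longrightarrow> phi z = z ^ m * psi z"
    and M: "\<And>r. 0 \<le> r \<Longrightarrow> r < 1 \<Longrightarrow> integral {0..2*pi} (\<lambda>t. norm (phi (of_real r * cis t))) \<le> M"
  obtains sq Rr B G where
    "\<And>n. 1/2 \<le> sq n" "\<And>n. sq n < 1" "sq \<longlonglongrightarrow> 1"
    "\<And>n. 1 < Rr n" "\<And>n. B n holomorphic_on ball 0 (Rr n)" "\<And>n. G n holomorphic_on ball 0 (Rr n)"
    "\<And>n z. z \<in> ball 0 (Rr n) \<Longrightarrow> psi (of_real (sq n) * z) = B n z * (G n z)\<^sup>2"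
    "\<And>n z. norm z \<le> 1 \<Longrightarrow> norm (B n z) \<le> 1"
    "\<And>n r. 0 \<le> r \<Longrightarrow> r \<le> 1 \<Longrightarrow> integral {0..2*pi} (\<lambda>t. (norm (G n (of_real r * cis t)))\<^sup>2) \<le> M * 2 ^ m"
proof -
  define a where "a = (\<lambda>n::nat. 1 - inverse (real (Suc n)) / 2)"
  have a: "1/2 \<le> a n" "a n < 1" for n
  proof -
    have "inverse (real (Suc n)) \<le> 1" by (simp add: inverse_le_1_iff)
    moreover have "0 < inverse (real (Suc n))" by simp
    ultimately show "1/2 \<le> a n" "a n < 1" by (auto simp: a_def)
  qed
  have alim: "a \<longlonglongrightarrow> 1"
  proof -
    have "(\<lambda>n. 1 - inverse (real (Suc n)) / 2) \<longlonglongrightarrow> 1 - 0 / 2"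
      by (intro tendsto_intros LIMSEQ_inverse_real_of_nat) simp
    then show ?thesis by (simp add: a_def)
  qed
  have "\<forall>n. \<exists>s. a n < s \<and> s < 1 \<and> (\<forall>z. norm z = s \<longrightarrow> psi z \<noteq> 0)"
  proof
    fix n
    obtain s where "a n < s" "s < 1" "\<And>z. norm z = s \<Longrightarrow> psi z \<noteq> 0"
      using choose_s[OF hpsi nc, of "a n"] a[of n] by auto
    then show "\<exists>s. a n < s \<and> s < 1 \<and> (\<forall>z. norm z = s \<longrightarrow> psi z \<noteq> 0)" by blast
  qed
  then obtain sq where sq: "\<And>n. a n < sq n" "\<And>n. sq n < 1" "\<And>n z. norm z = sq n \<Longrightarrow> psi z \<noteq> 0"
    by metis
  have sq2: "1/2 \<le> sq n" for n using a[of n] sq(1)[of n] by simp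
  have sqlim: "sq \<longlonglongrightarrow> 1"
  proof (rule tendsto_sandwich[OF _ _ alim tendsto_const])
    show "\<forall>\<^sub>F n in sequentially. a n \<le> sq n" using sq(1) by (intro always_eventually allI less_imp_le)
    show "\<forall>\<^sub>F n in sequentially. sq n \<le> 1" using sq(2) by (intro always_eventually allI less_imp_le)
  qed
  define F where "F = (\<lambda>n z. psi (of_real (sq n) * z))"
  have Fhol: "F n holomorphic_on ball 0 (1 / sq n)" for n
  proof -
    have sp: "0 < sq n" using sq2[of n] by simp
    show ?thesis unfolding F_def
    proof (rule holomorphic_on_compose_gen[where g = psi and t = "ball 0 1", unfolded o_def])
      show "(\<lambda>z. of_real (sq n) * z) holomorphic_on ball 0 (1 / sq n)" by (intro holomorphic_intros)
      show "psi holomorphic_on ball 0 1" by fact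
      show "(\<lambda>z::complex. of_real (sq n) * z) ` ball 0 (1 / sq n) \<subseteq> ball 0 1"
      proof (rule image_subsetI)
        fix z :: complex assume "z \<in> ball 0 (1 / sq n)"
        then have "norm z < 1 / sq n" by simp
        then have "sq n * norm z < 1" using sp by (simp add: field_simps)
        then show "of_real (sq n) * z \<in> ball 0 1" using sp by (simp add: norm_mult)
      qed
    qed
  qed
  have FR: "1 < 1 / sq n" for n using sq(2)[of n] sq2[of n] by (simp add: field_simps)
  have fc: "fact_concl (F n)" for n
  proof (rule finfact[OF Fhol FR])
    show "F n 0 \<noteq> 0" using psi0 by (simp add: F_def)
    show "F n z \<noteq> 0" if "norm z = 1" for z
      using sq(3)[of "of_real (sq n) * z" n] that sq2[of n] by (simp add: F_def norm_mult)
  qed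
  then have "\<forall>n. \<exists>T. 1 < snd (snd T) \<and> fst T holomorphic_on ball 0 (snd (snd T)) \<and>
      fst (snd T) holomorphic_on ball 0 (snd (snd T)) \<and>
      (\<forall>z\<in>ball 0 (snd (snd T)). F n z = fst T z * (fst (snd T) z)\<^sup>2) \<and>
      (\<forall>z. norm z \<le> 1 \<longrightarrow> norm (fst T z) \<le> 1) \<and> (\<forall>z. norm z = 1 \<longrightarrow> norm (fst T z) = 1)"
    unfolding fact_concl_def by force
  then obtain T where T: "\<And>n. 1 < snd (snd (T n)) \<and> fst (T n) holomorphic_on ball 0 (snd (snd (T n))) \<and>
      fst (snd (T n)) holomorphic_on ball 0 (snd (snd (T n))) \<and>
      (\<forall>z\<in>ball 0 (snd (snd (T n))). F n z = fst (T n) z * (fst (snd (T n)) z)\<^sup>2) \<and>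
      (\<forall>z. norm z \<le> 1 \<longrightarrow> norm (fst (T n) z) \<le> 1) \<and> (\<forall>z. norm z = 1 \<longrightarrow> norm (fst (T n) z) = 1)"
    by metis
  define B where "B = (\<lambda>n. fst (T n))"
  define G where "G = (\<lambda>n. fst (snd (T n)))"
  define Rr where "Rr = (\<lambda>n. snd (snd (T n)))"
  have R1: "1 < Rr n" for n using T[of n] by (simp add: Rr_def)
  have hB: "B n holomorphic_on ball 0 (Rr n)" for n using T[of n] by (simp add: Rr_def B_def)
  have hG: "G n holomorphic_on ball 0 (Rr n)" for n using T[of n] by (simp add: Rr_def G_def)
  have eqF: "z \<in> ball 0 (Rr n) \<Longrightarrow> psi (of_real (sq n) * z) = B n z * (G n z)\<^sup>2" for n z
    using T[of n] by (simp add: Rr_def B_def G_def F_def)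
  have bB: "norm z \<le> 1 \<Longrightarrow> norm (B n z) \<le> 1" for n z using T[of n] by (simp add: B_def)
  have bB1: "norm z = 1 \<Longrightarrow> norm (B n z) = 1" for n z using T[of n] by (simp add: B_def)
  have M0: "0 \<le> M"
  proof -
    have "0 \<le> integral {0..2*pi} (\<lambda>t. norm (phi (of_real 0 * cis t)))"
      by (rule integral_nonneg) auto
    also have "\<dots> \<le> M" by (rule M) auto
    finally show ?thesis .
  qed
  have G1: "integral {0..2*pi} (\<lambda>t. (norm (G n (of_real 1 * cis t)))\<^sup>2) \<le> M * 2 ^ m" for n
  proof -
    have sp: "0 < sq n" using sq2[of n] by simp
    have pt: "(norm (G n (of_real 1 * cis t)))\<^sup>2 = norm (phi (of_real (sq n) * cis t)) / sq n ^ m" for t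
    proof -
      have cb: "cis t \<in> ball 0 (Rr n)" using R1[of n] by simp
      have "norm (psi (of_real (sq n) * cis t)) = norm (B n (cis t)) * (norm (G n (cis t)))\<^sup>2"
        using eqF[OF cb] by (simp add: norm_mult norm_power)
      also have "norm (B n (cis t)) = 1" by (rule bB1) simp
      finally have e1: "norm (psi (of_real (sq n) * cis t)) = (norm (G n (cis t)))\<^sup>2" by simp
      have inb: "of_real (sq n) * cis t \<in> ball 0 1" using sq(2)[of n] sp by (simp add: norm_mult)
      have "phi (of_real (sq n) * cis t) = (of_real (sq n) * cis t) ^ m * psi (of_real (sq n) * cis t)"
        by (rule eqp[OF inb])
      then have "norm (phi (of_real (sq n) * cis t)) = sq n ^ m * norm (psi (of_real (sq n) * cis t))"
        using sp by (simp add: norm_mult norm_power)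
      then show ?thesis using e1 sp by (simp add: field_simps)
    qed
    have "integral {0..2*pi} (\<lambda>t. (norm (G n (of_real 1 * cis t)))\<^sup>2)
        = integral {0..2*pi} (\<lambda>t. norm (phi (of_real (sq n) * cis t))) / sq n ^ m"
      by (simp only: pt integral_div_const)
    also have "\<dots> \<le> M / sq n ^ m"
      by (rule divide_right_mono[OF M]) (use sp sq(2)[of n] in auto)
    also have "\<dots> \<le> M * 2 ^ m"
    proof -
      have "(1/2) ^ m \<le> sq n ^ m" using sq2[of n] by (intro power_mono) auto
      then have "1 / sq n ^ m \<le> 2 ^ m" using sp by (simp add: field_simps power_divide)
      then show ?thesis using M0 by (simp add: divide_inverse mult_left_mono flip: inverse_eq_divide)
    qed
    finally show ?thesis .
  qed
  have Gr: "integral {0..2*pi} (\<lambda>t. (norm (G n (of_real r * cis t)))\<^sup>2) \<le> M * 2 ^ m"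
    if "0 \<le> r" "r \<le> 1" for n r
    using parseval_mono[OF hG[of n], of r 1] that R1[of n] G1[of n] by simp
  show ?thesis
    by (rule that[of sq Rr B G, OF sq2 sq(2) sqlim R1 hB hG eqF bB Gr])
qed


lemma fact_H1_nc:
  fixes phi psi :: "complex \<Rightarrow> complex"
  assumes hpsi: "psi holomorphic_on ball 0 1" and psi0: "psi 0 \<noteq> 0"
    and nc: "\<not> psi constant_on ball 0 1 \<or> (\<forall>z\<in>ball 0 1. psi z \<noteq> 0)"
    and eqp: "\<And>z. z \<in> ball 0 1 \<Longrightarrow> phi z = z ^ m * psi z"
    and M: "\<And>r. 0 \<le> r \<Longrightarrow> r < 1 \<Longrightarrow> integral {0..2*pi} (\<lambda>t. norm (phi (of_real r * cis t))) \<le> M"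
  obtains p1 p2 C where "p1 holomorphic_on ball 0 1" "p2 holomorphic_on ball 0 1"
    "\<And>r. 0 \<le> r \<Longrightarrow> r < 1 \<Longrightarrow> integral {0..2*pi} (\<lambda>t. (norm (p1 (of_real r * cis t)))\<^sup>2) \<le> C"
    "\<And>r. 0 \<le> r \<Longrightarrow> r < 1 \<Longrightarrow> integral {0..2*pi} (\<lambda>t. (norm (p2 (of_real r * cis t)))\<^sup>2) \<le> C"
    "\<And>z. z \<in> ball 0 1 \<Longrightarrow> phi z = p1 z * p2 z"
proof (rule seq_fact[OF hpsi psi0 nc eqp M], goal_cases)
  case 1 then show ?case by simp
next
  case 2 then show ?case by simp
next
  case 3 then show ?case by simp
next
  case (4 sq Rr B G)
  note sq2 = "4"(2) and sq1 = "4"(3) and sqlim = "4"(4) and R1 = "4"(5) and hB = "4"(6)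
    and hG = "4"(7) and eqF = "4"(8) and bB = "4"(9) and Gr = "4"(10)
  define C0 where "C0 = M * 2 ^ m"
  define K0 where "K0 = sqrt (C0 / (2 * pi))"
  have hB1: "B n holomorphic_on ball 0 1" for n by (rule holomorphic_on_subset[OF hB]) (use R1[of n] in auto)
  have hG1: "G n holomorphic_on ball 0 1" for n by (rule holomorphic_on_subset[OF hG]) (use R1[of n] in auto)
  have Gb: "norm (G n z) \<le> K0 / (1 - norm z)" if "z \<in> ball 0 1" for n z
  proof -
    have "integral {0..2*pi} (\<lambda>t. (norm (G n (cis t)))\<^sup>2) \<le> C0"
      using Gr[of 1 n] by (simp add: C0_def)
    then show ?thesis unfolding K0_def by (rule sup_bound_H2[OF hG R1]) (use that in simp)
  qed
  have M0: "0 \<le> M"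
  proof -
    have "0 \<le> integral {0..2*pi} (\<lambda>t. norm (phi (of_real 0 * cis t)))"
      by (rule integral_nonneg) auto
    also have "\<dots> \<le> M" by (rule M) auto
    finally show ?thesis .
  qed
  have K00: "0 \<le> K0" using M0 by (simp add: K0_def C0_def)
  define H1 where "H1 = {h. h holomorphic_on ball 0 1 \<and> (\<forall>z\<in>ball 0 1. norm (h z) \<le> K0 / (1 - norm z))}"
  obtain g r1 where hg: "g holomorphic_on ball 0 1" and r1: "strict_mono (r1 :: nat \<Rightarrow> nat)"
    and pg: "\<And>x. x \<in> ball 0 1 \<Longrightarrow> ((\<lambda>n. G (r1 n) x) \<longlongrightarrow> g x) sequentially"
    and ug: "\<And>K. \<lbrakk>compact K; K \<subseteq> ball 0 1\<rbrakk> \<Longrightarrow> uniform_limit K (G \<circ> r1) g sequentially"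
  proof (rule Montel[of "ball 0 1" H1 G])
    show "open (ball (0::complex) 1)" by simp
    show "h holomorphic_on ball 0 1" if "h \<in> H1" for h using that by (simp add: H1_def)
    show "\<exists>B. \<forall>h\<in>H1. \<forall>z\<in>K. norm (h z) \<le> B" if KK: "compact K" "K \<subseteq> ball 0 1" for K
    proof -
      obtain rho where rho: "0 \<le> rho" "rho < 1" "\<And>z. z \<in> K \<Longrightarrow> norm z \<le> rho"
        using compact_in_ball1[OF KK] by blast
      show ?thesis
      proof (intro exI ballI)
        fix h z assume h: "h \<in> H1" and z: "z \<in> K"
        have zb: "z \<in> ball 0 1" using z KK(2) by blast
        have "norm (h z) \<le> K0 / (1 - norm z)" using h zb by (simp add: H1_def)
        also have "\<dots> \<le> K0 / (1 - rho)"
          using rho(2) rho(3)[OF z] K00 by (intro divide_left_mono) auto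
        finally show "norm (h z) \<le> K0 / (1 - rho)" .
      qed
    qed
    show "range G \<subseteq> H1" using hG1 Gb by (auto simp: H1_def)
  qed auto
  define H2 where "H2 = {h. h holomorphic_on ball 0 1 \<and> (\<forall>z\<in>ball 0 1. norm (h z) \<le> 1)}"
  obtain b r2 where hb: "b holomorphic_on ball 0 1" and r2: "strict_mono (r2 :: nat \<Rightarrow> nat)"
    and pb: "\<And>x. x \<in> ball 0 1 \<Longrightarrow> ((\<lambda>n. B (r1 (r2 n)) x) \<longlongrightarrow> b x) sequentially"
  proof (rule Montel[of "ball 0 1" H2 "\<lambda>n. B (r1 n)"])
    show "open (ball (0::complex) 1)" by simp
    show "h holomorphic_on ball 0 1" if "h \<in> H2" for h using that by (simp add: H2_def)
    show "\<exists>B. \<forall>h\<in>H2. \<forall>z\<in>K. norm (h z) \<le> B" if KK: "compact K" "K \<subseteq> ball 0 1" for K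
      using KK by (intro exI[of _ 1]) (auto simp: H2_def)
    show "range (\<lambda>n. B (r1 n)) \<subseteq> H2" using hB1 bB by (auto simp: H2_def)
  qed auto
  define q where "q = r1 \<circ> r2"
  have q: "strict_mono q" unfolding q_def using r1 r2 by (rule strict_mono_o)
  have eqlim: "psi z = b z * (g z)\<^sup>2" and bz: "norm (b z) \<le> 1" if z: "z \<in> ball 0 1" for z
  proof -
    have LB: "(\<lambda>n. B (q n) z) \<longlonglongrightarrow> b z" using pb[OF z] by (simp add: q_def)
    have LG: "(\<lambda>n. G (q n) z) \<longlonglongrightarrow> g z"
      using LIMSEQ_subseq_LIMSEQ[OF pg[OF z] r2] by (simp add: q_def o_def)
    have Lsq: "(\<lambda>n. sq (q n)) \<longlonglongrightarrow> 1" using LIMSEQ_subseq_LIMSEQ[OF sqlim q] by (simp add: o_def)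
    have "(\<lambda>n. of_real (sq (q n)) * z) \<longlonglongrightarrow> of_real 1 * z"
      by (intro tendsto_intros Lsq)
    then have L1: "(\<lambda>n. of_real (sq (q n)) * z) \<longlonglongrightarrow> z" by simp
    have ic: "isCont psi z"
      using continuous_on_interior[OF holomorphic_on_imp_continuous_on[OF hpsi]] z by simp
    have LP: "(\<lambda>n. psi (of_real (sq (q n)) * z)) \<longlonglongrightarrow> psi z"
      by (rule isCont_tendsto_compose[OF ic L1])
    have e: "psi (of_real (sq (q n)) * z) = B (q n) z * (G (q n) z)\<^sup>2" for n
      by (rule eqF) (use z R1[of "q n"] in auto)
    have "(\<lambda>n. B (q n) z * (G (q n) z)\<^sup>2) \<longlonglongrightarrow> b z * (g z)\<^sup>2"
      by (intro tendsto_intros LB LG)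
    then show "psi z = b z * (g z)\<^sup>2" using LP unfolding e by (rule LIMSEQ_unique[rotated])
    have "(\<lambda>n. norm (B (q n) z)) \<longlonglongrightarrow> norm (b z)" by (intro tendsto_intros LB)
    then show "norm (b z) \<le> 1"
      by (rule LIMSEQ_le_const2) (use bB z in \<open>auto simp: less_imp_le\<close>)
  qed
  have gb: "integral {0..2*pi} (\<lambda>t. (norm (g (of_real r * cis t)))\<^sup>2) \<le> C0" if r: "0 \<le> r" "r < 1" for r
  proof -
    have sK: "sphere 0 r \<subseteq> ball (0::complex) 1" using r by auto
    have UL1: "uniform_limit (sphere 0 r) (G \<circ> r1) g sequentially"
      by (rule ug[OF compact_sphere sK])
    have UL2: "uniform_limit (sphere 0 r) (\<lambda>n. G (q n)) g sequentially"
      using filterlim_compose[OF UL1 filterlim_subseq[OF r2]] by (simp add: q_def o_def)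
    have UL3: "uniform_limit {0..2*pi} (\<lambda>n t. G (q n) (of_real r * cis t)) (\<lambda>t. g (of_real r * cis t)) sequentially"
      by (rule uniform_limit_compose'[OF UL2]) (use r in \<open>auto simp: norm_mult\<close>)
    define Kr where "Kr = K0 / (1 - r)"
    have uc: "uniformly_continuous_on (cball 0 Kr) (\<lambda>w::complex. (norm w)\<^sup>2)"
      by (intro compact_uniformly_continuous continuous_intros compact_cball)
    have ev: "\<forall>\<^sub>F n in sequentially. \<forall>t\<in>{0..2*pi}. G (q n) (of_real r * cis t) \<in> cball 0 Kr"
    proof (intro always_eventually allI ballI)
      fix n t
      have "norm (G (q n) (of_real r * cis t)) \<le> K0 / (1 - norm (of_real r * cis t))"
        by (rule Gb) (use r in \<open>auto simp: norm_mult\<close>)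
      then show "G (q n) (of_real r * cis t) \<in> cball 0 Kr" using r by (simp add: Kr_def norm_mult)
    qed
    have UL4: "uniform_limit {0..2*pi} (\<lambda>n t. (norm (G (q n) (of_real r * cis t)))\<^sup>2)
                 (\<lambda>t. (norm (g (of_real r * cis t)))\<^sup>2) sequentially"
      by (rule uniform_limit_compose_uniformly_continuous_on[OF UL3 uc ev closed_cball])
    have cn: "continuous_on {0..2*pi} (\<lambda>t. (norm (G (q n) (of_real r * cis t)))\<^sup>2)" for n
      by (intro continuous_intros cont_circ[OF hG1]) (use r in auto)
    have "(\<lambda>n. integral {0..2*pi} (\<lambda>t. (norm (G (q n) (of_real r * cis t)))\<^sup>2))
          \<longlonglongrightarrow> integral {0..2*pi} (\<lambda>t. (norm (g (of_real r * cis t)))\<^sup>2)"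
      by (rule unif_int_conv[OF cn UL4])
    then show ?thesis
      by (rule LIMSEQ_le_const2) (use Gr r in \<open>auto simp: C0_def\<close>)
  qed
  show ?thesis
  proof (rule that[of "\<lambda>z. z ^ m * b z * g z" g C0])
    show "(\<lambda>z. z ^ m * b z * g z) holomorphic_on ball 0 1" by (intro holomorphic_intros hb hg)
    show "g holomorphic_on ball 0 1" by (rule hg)
    show "integral {0..2*pi} (\<lambda>t. (norm (g (of_real r * cis t)))\<^sup>2) \<le> C0" if "0 \<le> r" "r < 1" for r
      by (rule gb[OF that])
    show "integral {0..2*pi} (\<lambda>t. (norm ((of_real r * cis t) ^ m * b (of_real r * cis t) * g (of_real r * cis t)))\<^sup>2) \<le> C0"
      if r: "0 \<le> r" "r < 1" for r
    proof -
      have hp1: "(\<lambda>z. z ^ m * b z * g z) holomorphic_on ball 0 1" by (intro holomorphic_intros hb hg)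
      have "integral {0..2*pi} (\<lambda>t. (norm ((of_real r * cis t) ^ m * b (of_real r * cis t) * g (of_real r * cis t)))\<^sup>2)
          \<le> integral {0..2*pi} (\<lambda>t. (norm (g (of_real r * cis t)))\<^sup>2)"
      proof (rule integral_le)
        show "(\<lambda>t. (norm ((of_real r * cis t) ^ m * b (of_real r * cis t) * g (of_real r * cis t)))\<^sup>2) integrable_on {0..2*pi}"
          by (intro integrable_continuous_real continuous_intros cont_circ[OF hb r] cont_circ[OF hg r])
        show "(\<lambda>t. (norm (g (of_real r * cis t)))\<^sup>2) integrable_on {0..2*pi}"
          by (intro integrable_continuous_real continuous_intros cont_circ[OF hg r])
        fix t
        have zb: "of_real r * cis t \<in> ball 0 1" using r by (simp add: norm_mult)
        have n1: "norm ((of_real r * cis t) ^ m :: complex) \<le> 1" using r by (simp add: norm_mult norm_power power_le_one)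
        have n2: "norm (b (of_real r * cis t)) \<le> 1" by (rule bz[OF zb])
        have "norm ((of_real r * cis t) ^ m * b (of_real r * cis t) * g (of_real r * cis t))
            \<le> norm (g (of_real r * cis t))"
          using mult_mono[OF n1 n2] by (simp add: norm_mult mult_left_le_one_le mult_le_one)
        then show "(norm ((of_real r * cis t) ^ m * b (of_real r * cis t) * g (of_real r * cis t)))\<^sup>2
            \<le> (norm (g (of_real r * cis t)))\<^sup>2" by (simp add: power_mono)
      qed
      also have "\<dots> \<le> C0" by (rule gb[OF r])
      finally show ?thesis .
    qed
    show "phi z = z ^ m * b z * g z * g z" if "z \<in> ball 0 1" for z
      using eqp[OF that] eqlim[OF that] by (simp add: power2_eq_square mult_ac)
  qed
qed


lemma fact_H1:
  fixes phi :: "complex \<Rightarrow> complex"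
  assumes hol: "phi holomorphic_on ball 0 1"
    and M: "\<And>r. 0 \<le> r \<Longrightarrow> r < 1 \<Longrightarrow> integral {0..2*pi} (\<lambda>t. norm (phi (of_real r * cis t))) \<le> M"
  obtains p1 p2 C where "p1 holomorphic_on ball 0 1" "p2 holomorphic_on ball 0 1"
    "\<And>r. 0 \<le> r \<Longrightarrow> r < 1 \<Longrightarrow> integral {0..2*pi} (\<lambda>t. (norm (p1 (of_real r * cis t)))\<^sup>2) \<le> C"
    "\<And>r. 0 \<le> r \<Longrightarrow> r < 1 \<Longrightarrow> integral {0..2*pi} (\<lambda>t. (norm (p2 (of_real r * cis t)))\<^sup>2) \<le> C"
    "\<And>z. z \<in> ball 0 1 \<Longrightarrow> phi z = p1 z * p2 z"
proof (cases "phi constant_on ball 0 1")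
  case True
  then obtain c where c: "\<And>x. x \<in> ball 0 1 \<Longrightarrow> phi x = c" unfolding constant_on_def by blast
  show ?thesis
  proof (rule that[of "\<lambda>z. c" "\<lambda>z. 1" "2 * pi * ((norm c)\<^sup>2 + 1)"])
    show "(\<lambda>z. c) holomorphic_on ball 0 1" "(\<lambda>z. 1) holomorphic_on ball 0 1" by (auto intro: holomorphic_intros)
    show "integral {0..2*pi} (\<lambda>t. (norm c)\<^sup>2) \<le> 2 * pi * ((norm c)\<^sup>2 + 1)" for r by simp
    show "integral {0..2*pi} (\<lambda>t. (norm (1::complex))\<^sup>2) \<le> 2 * pi * ((norm c)\<^sup>2 + 1)" for r by simp
    show "phi z = c * 1" if "z \<in> ball 0 1" for z using c[OF that] by simp
  qed
next
  case False
  obtain m psi where hpsi: "psi holomorphic_on ball 0 1" and psi0: "psi 0 \<noteq> 0"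
    and eqp: "\<And>z. z \<in> ball 0 1 \<Longrightarrow> phi z = z ^ m * psi z"
    using factor_power[OF hol False] by blast
  have nc: "\<not> psi constant_on ball 0 1 \<or> (\<forall>z\<in>ball 0 1. psi z \<noteq> 0)"
  proof (cases "psi constant_on ball 0 1")
    case True
    then obtain y where y: "\<And>x. x \<in> ball 0 1 \<Longrightarrow> psi x = y" unfolding constant_on_def by blast
    have "y = psi 0" using y[of 0] by simp
    then show ?thesis using y psi0 by auto
  qed simp
  show ?thesis
    using fact_H1_nc[OF hpsi psi0 nc eqp M] that by blast
qed

theorem riesz_R:
  fixes phi :: "complex \<Rightarrow> complex"
  assumes hol: "phi holomorphic_on ball 0 1"
    and M: "\<And>r. 0 \<le> r \<Longrightarrow> r < 1 \<Longrightarrow> integral {0..2*pi} (\<lambda>t. norm (phi (of_real r * cis t))) \<le> M"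
    and eta: "eta > 0"
  shows "\<exists>s0<1. \<forall>sg r. s0 < sg \<longrightarrow> sg < 1 \<longrightarrow> 0 \<le> r \<longrightarrow> r < 1 \<longrightarrow>
     integral {0..2*pi} (\<lambda>t. norm (phi (of_real r * cis t) - phi (of_real (sg * r) * cis t))) \<le> eta"
proof -
  obtain p1 p2 C where h1: "p1 holomorphic_on ball 0 1" and h2: "p2 holomorphic_on ball 0 1"
    and C1: "\<And>r. 0 \<le> r \<Longrightarrow> r < 1 \<Longrightarrow> integral {0..2*pi} (\<lambda>t. (norm (p1 (of_real r * cis t)))\<^sup>2) \<le> C"
    and C2: "\<And>r. 0 \<le> r \<Longrightarrow> r < 1 \<Longrightarrow> integral {0..2*pi} (\<lambda>t. (norm (p2 (of_real r * cis t)))\<^sup>2) \<le> C"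
    and eq: "\<And>z. z \<in> ball 0 1 \<Longrightarrow> phi z = p1 z * p2 z"
    using fact_H1[OF hol M] by blast
  show ?thesis by (rule R_from_fact[OF hol h1 h2 C1 C2 eq eta])
qed


lemma cm_alt: "circle_mean r F = integral {0..2*pi} (\<lambda>t. F (of_real r * cis t)) / of_real (2*pi)"
  by (simp add: circle_mean_def)

lemma cm_bound:
  fixes phi u :: "complex \<Rightarrow> complex"
  assumes hphi: "phi holomorphic_on ball 0 1" and hu: "u holomorphic_on ball 0 1" and r: "0 \<le> r" "r < 1"
    and K: "\<And>t. norm (u (of_real r * cis t)) \<le> K"
  shows "norm (circle_mean r (\<lambda>z. phi z * cnj (u z))) \<le> K * integral {0..2*pi} (\<lambda>t. norm (phi (of_real r * cis t))) / (2*pi)"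
proof -
  have c1: "continuous_on {0..2*pi} (\<lambda>t. phi (of_real r * cis t))" by (rule cont_circ[OF hphi r])
  have c2: "continuous_on {0..2*pi} (\<lambda>t. u (of_real r * cis t))" by (rule cont_circ[OF hu r])
  have i2: "(\<lambda>t. norm (phi (of_real r * cis t))) integrable_on {0..2*pi}"
    by (intro integrable_continuous_real continuous_intros c1)
  have "norm (integral {0..2*pi} (\<lambda>t. phi (of_real r * cis t) * cnj (u (of_real r * cis t))))
      \<le> integral {0..2*pi} (\<lambda>t. K * norm (phi (of_real r * cis t)))"
  proof (rule integral_norm_bound_integral)
    show "(\<lambda>t. phi (of_real r * cis t) * cnj (u (of_real r * cis t))) integrable_on {0..2*pi}"
      by (intro integrable_continuous_real continuous_intros c1 c2)
    show "(\<lambda>t. K * norm (phi (of_real r * cis t))) integrable_on {0..2*pi}"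
      by (intro integrable_continuous_real continuous_intros c1)
    fix t
    have "norm (phi (of_real r * cis t) * cnj (u (of_real r * cis t))) = norm (phi (of_real r * cis t)) * norm (u (of_real r * cis t))"
      by (simp add: norm_mult)
    also have "\<dots> \<le> norm (phi (of_real r * cis t)) * K" by (rule mult_left_mono[OF K]) simp
    finally show "norm (phi (of_real r * cis t) * cnj (u (of_real r * cis t))) \<le> K * norm (phi (of_real r * cis t))"
      by (simp add: mult.commute)
  qed
  also have "\<dots> = K * integral {0..2*pi} (\<lambda>t. norm (phi (of_real r * cis t)))"
    by (rule integral_mult[OF i2, symmetric])
  finally have "norm (integral {0..2*pi} (\<lambda>t. phi (of_real r * cis t) * cnj (u (of_real r * cis t))))
      \<le> K * integral {0..2*pi} (\<lambda>t. norm (phi (of_real r * cis t)))" .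
  then show ?thesis by (simp add: cm_alt norm_divide divide_right_mono)
qed

lemma cm_diff:
  fixes phi1 phi2 u1 u2 :: "complex \<Rightarrow> complex"
  assumes "continuous_on {0..2*pi} (\<lambda>t. F (of_real r * cis t))" "continuous_on {0..2*pi} (\<lambda>t. G (of_real r * cis t))"
  shows "circle_mean r (\<lambda>z. F z - G z) = circle_mean r F - circle_mean r G"
proof -
  have "integral {0..2*pi} (\<lambda>t. F (of_real r * cis t) - G (of_real r * cis t))
      = integral {0..2*pi} (\<lambda>t. F (of_real r * cis t)) - integral {0..2*pi} (\<lambda>t. G (of_real r * cis t))"
    by (rule integral_diff) (use assms in \<open>auto intro: integrable_continuous_real\<close>)
  then show ?thesis by (simp add: cm_alt diff_divide_distrib)
qed

lemma tc_H1_bound: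
  fixes phi :: "complex \<Rightarrow> complex"
  assumes hol: "phi holomorphic_on ball 0 1"
    and M: "\<And>r. 0 \<le> r \<Longrightarrow> r < 1 \<Longrightarrow> integral {0..2*pi} (\<lambda>t. norm (phi (of_real r * cis t))) \<le> M"
  shows "norm (tc phi k) \<le> M / (2 * pi)"
proof -
  have le: "norm (tc phi k) * r ^ k \<le> M / (2 * pi)" if r: "0 \<le> r" "r < 1" for r
  proof -
    have "integral {0..2*pi} (\<lambda>t. phi (of_real r * cis t) * cnj (cis t ^ k)) = 2 * pi * (tc phi k * of_real r ^ k)"
      by (rule coef_formula[OF hol r])
    moreover have "norm (integral {0..2*pi} (\<lambda>t. phi (of_real r * cis t) * cnj (cis t ^ k)))
        \<le> integral {0..2*pi} (\<lambda>t. norm (phi (of_real r * cis t)))"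
      by (rule integral_norm_bound_integral)
         (auto intro!: integrable_continuous_real continuous_intros cont_circ[OF hol r] simp: norm_mult norm_power)
    ultimately have "2 * pi * (norm (tc phi k) * r ^ k) \<le> M"
      using M[OF r] r by (simp add: norm_mult norm_power)
    then show ?thesis by (simp add: field_simps)
  qed
  have lim: "((\<lambda>r. norm (tc phi k) * r ^ k) \<longlongrightarrow> norm (tc phi k) * 1 ^ k) (at_left 1)"
    by (intro tendsto_intros)
  have ev: "eventually (\<lambda>r. norm (tc phi k) * r ^ k \<le> M / (2 * pi)) (at_left (1::real))"
    unfolding eventually_at_left_field by (rule exI[of _ 0]) (auto intro!: le)
  show ?thesis using tendsto_upperbound[OF lim ev] by simp
qed

lemma tc_Hinf_bound:
  fixes u :: "complex \<Rightarrow> complex"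
  assumes hol: "u holomorphic_on ball 0 1" and K: "\<And>z. z \<in> ball 0 1 \<Longrightarrow> norm (u z) \<le> K"
  shows "norm (tc u k) \<le> K"
proof -
  have "norm (tc u k) \<le> (2 * pi * K) / (2 * pi)"
  proof (rule tc_H1_bound[OF hol])
    fix r :: real assume r: "0 \<le> r" "r < 1"
    have "integral {0..2*pi} (\<lambda>t. norm (u (of_real r * cis t))) \<le> integral {0..2*pi} (\<lambda>t. K)"
      by (rule integral_le)
         (use r in \<open>auto intro!: integrable_continuous_real continuous_intros cont_circ[OF hol] K simp: norm_mult\<close>)
    then show "integral {0..2*pi} (\<lambda>t. norm (u (of_real r * cis t))) \<le> 2 * pi * K" by simp
  qed
  then show ?thesis by simp
qed


lemma limit_from_approx:
  fixes P :: "real \<Rightarrow> complex"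
  assumes A: "\<And>e. e > 0 \<Longrightarrow> \<exists>Q L. (Q \<longlongrightarrow> L) (at_left 1) \<and> (\<forall>r. 0 < r \<and> r < 1 \<longrightarrow> norm (P r - Q r) \<le> e)"
  shows "\<exists>L. (P \<longlongrightarrow> L) (at_left 1)"
proof -
  define ep where "ep = (\<lambda>n::nat. 1 / real (Suc n))"
  have ep: "ep n > 0" for n by (simp add: ep_def)
  have "\<forall>n. \<exists>QL. (fst QL \<longlongrightarrow> snd QL) (at_left 1) \<and> (\<forall>r. 0 < r \<and> r < 1 \<longrightarrow> norm (P r - fst QL r) \<le> ep n)"
    using A[OF ep] by force
  then obtain QL where QL: "\<And>n. (fst (QL n) \<longlongrightarrow> snd (QL n)) (at_left 1)"
    "\<And>n r. 0 < r \<Longrightarrow> r < 1 \<Longrightarrow> norm (P r - fst (QL n) r) \<le> ep n"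
    by metis
  define Q where "Q = (\<lambda>n. fst (QL n))"
  define L where "L = (\<lambda>n. snd (QL n))"
  have QL1: "(Q n \<longlongrightarrow> L n) (at_left 1)" for n using QL(1) by (simp add: Q_def L_def)
  have QL2: "0 < r \<Longrightarrow> r < 1 \<Longrightarrow> norm (P r - Q n r) \<le> ep n" for n r using QL(2) by (simp add: Q_def)
  have ev01: "eventually (\<lambda>r. 0 < r \<and> r < (1::real)) (at_left 1)"
    unfolding eventually_at_left_field by (rule exI[of _ 0]) auto
  have Ld: "norm (L n - L m) \<le> ep n + ep m" for n m
  proof -
    have lim: "((\<lambda>r. norm (Q n r - Q m r)) \<longlongrightarrow> norm (L n - L m)) (at_left 1)"
      by (intro tendsto_intros QL1)
    have "eventually (\<lambda>r. norm (Q n r - Q m r) \<le> ep n + ep m) (at_left 1)"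
      using ev01
    proof eventually_elim
      case (elim r)
      have "Q n r - Q m r = (P r - Q m r) - (P r - Q n r)" by simp
      then have "norm (Q n r - Q m r) \<le> norm (P r - Q m r) + norm (P r - Q n r)"
        using norm_triangle_ineq4 by metis
      then have "norm (Q n r - Q m r) \<le> norm (P r - Q n r) + norm (P r - Q m r)" by simp
      also have "\<dots> \<le> ep n + ep m" using QL2 elim by (intro add_mono) auto
      finally show ?case .
    qed
    then show ?thesis using tendsto_upperbound[OF lim] by simp
  qed
  have "Cauchy L"
  proof (rule CauchyI)
    fix e :: real assume e: "0 < e"
    obtain N0 where N0: "2 / e < real N0" using reals_Archimedean2 by blast
    define N where "N = N0"
    have N: "2 / e < real (Suc N)" using N0 by (simp add: N_def)
    have epN: "ep k \<le> ep N" if "k \<ge> N" for k using that by (simp add: ep_def frac_le)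
    have "2 * ep N < e" using N e by (simp add: ep_def field_simps)
    then show "\<exists>M. \<forall>m\<ge>M. \<forall>n\<ge>M. norm (L m - L n) < e"
      using Ld epN by (intro exI[of _ N]) (smt (verit))
  qed
  then obtain L0 where L0: "L \<longlonglongrightarrow> L0" using Cauchy_convergent_iff convergent_def by blast
  have "(P \<longlongrightarrow> L0) (at_left 1)"
  proof (rule tendstoI)
    fix e :: real assume e: "0 < e"
    have e3: "e / 3 > 0" using e by simp
    have "eventually (\<lambda>n. dist (L n) L0 < e / 3) sequentially"
      using L0 e3 tendsto_iff by blast
    then have "eventually (\<lambda>n. norm (L n - L0) < e / 3) sequentially"
      by (simp add: dist_norm)
    moreover have "eventually (\<lambda>n. ep n < e / 3) sequentially"
    proof -
      have "ep \<longlonglongrightarrow> 0" unfolding ep_def using LIMSEQ_inverse_real_of_nat by (simp add: inverse_eq_divide)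
      then show ?thesis using e3 by (rule order_tendstoD(2))
    qed
    ultimately have "eventually (\<lambda>n. norm (L n - L0) < e / 3 \<and> ep n < e / 3) sequentially"
      by (rule eventually_conj)
    then obtain N where "\<forall>n\<ge>N. norm (L n - L0) < e / 3 \<and> ep n < e / 3"
      unfolding eventually_sequentially by blast
    then obtain n where n: "norm (L n - L0) < e / 3" "ep n < e / 3" by blast
    have "eventually (\<lambda>r. dist (Q n r) (L n) < e / 3) (at_left 1)"
      using QL1[of n] e3 tendsto_iff by blast
    then show "eventually (\<lambda>r. dist (P r) L0 < e) (at_left 1)"
      using ev01
    proof eventually_elim
      case (elim r)
      have eq: "P r - L0 = (P r - Q n r) + ((Q n r - L n) + (L n - L0))" by simp
      have "norm (P r - L0) \<le> norm (P r - Q n r) + norm ((Q n r - L n) + (L n - L0))"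
        unfolding eq by (rule norm_triangle_ineq)
      also have "\<dots> \<le> norm (P r - Q n r) + (norm (Q n r - L n) + norm (L n - L0))"
        by (intro add_left_mono norm_triangle_ineq)
      finally have "dist (P r) L0 \<le> norm (P r - Q n r) + dist (Q n r) (L n) + norm (L n - L0)"
        by (simp add: dist_norm)
      also have "\<dots> < e" using QL2[of r n] elim n by simp
      finally show ?case .
    qed
  qed
  then show ?thesis by blast
qed


lemma dil_series:
  fixes phi u :: "complex \<Rightarrow> complex"
  assumes hphi: "phi holomorphic_on ball 0 1" and hu: "u holomorphic_on ball 0 1"
    and sg: "0 \<le> sg" "sg < 1" and r: "0 \<le> r" "r < 1"
  shows "(\<lambda>k. tc phi k * cnj (tc u k) * of_real (sg * r * r) ^ k) sums
           circle_mean r (\<lambda>z. phi (of_real sg * z) * cnj (u z))"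
proof -
  have a: "0 \<le> sg * r" "sg * r < 1" using sg r by (auto intro: le_less_trans[OF mult_left_le_one_le])
  have S: "(\<lambda>k. 2 * pi * (tc phi k * cnj (tc u k) * of_real (sg * r * r) ^ k)) sums
           integral {0..2*pi} (\<lambda>t. phi (of_real (sg * r) * cis t) * cnj (u (of_real r * cis t)))"
    using pairing_series[OF hphi a hu r] by (simp add: mult.assoc)
  have "(\<lambda>k. 2 * pi * (tc phi k * cnj (tc u k) * of_real (sg * r * r) ^ k) / of_real (2 * pi)) sums
           (integral {0..2*pi} (\<lambda>t. phi (of_real (sg * r) * cis t) * cnj (u (of_real r * cis t))) / of_real (2 * pi))"
    by (rule sums_divide[OF S])
  then show ?thesis by (simp add: cm_alt mult.assoc)
qed

lemma dil_limit:
  fixes phi u :: "complex \<Rightarrow> complex"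
  assumes hphi: "phi holomorphic_on ball 0 1"
    and M: "\<And>r. 0 \<le> r \<Longrightarrow> r < 1 \<Longrightarrow> integral {0..2*pi} (\<lambda>t. norm (phi (of_real r * cis t))) \<le> M"
    and hu: "u holomorphic_on ball 0 1" and K: "\<And>z. z \<in> ball 0 1 \<Longrightarrow> norm (u z) \<le> K"
    and sg: "0 \<le> sg" "sg < 1"
  shows "\<exists>L. ((\<lambda>r. circle_mean r (\<lambda>z. phi (of_real sg * z) * cnj (u z))) \<longlongrightarrow> L) (at_left 1)"
proof -
  define a where "a = (\<lambda>k (r::real). tc phi k * cnj (tc u k) * of_real (sg * r * r) ^ k)"
  define b where "b = (\<lambda>k. tc phi k * cnj (tc u k) * of_real (sg * 1 * 1) ^ k)"
  have lim: "((\<lambda>r. a k r) \<longlongrightarrow> b k) (at_left 1)" for k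
    unfolding a_def b_def by (intro tendsto_intros)
  have tp: "norm (tc phi k) \<le> M / (2 * pi)" for k by (rule tc_H1_bound[OF hphi M])
  have tu: "norm (tc u k) \<le> K" for k by (rule tc_Hinf_bound[OF hu K])
  have M0: "0 \<le> M / (2 * pi)" using tp[of 0] norm_ge_zero order_trans by blast
  have K0: "0 \<le> K" using tu[of 0] norm_ge_zero order_trans by blast
  have MK0: "0 \<le> M / (2 * pi) * K" using M0 K0 by (rule mult_nonneg_nonneg)
  have bnd: "eventually (\<lambda>(k, r). norm (a k r) \<le> M / (2 * pi) * K * sg ^ k) (at_top \<times>\<^sub>F at_left (1::real))"
    unfolding eventually_prod_filter
  proof (intro exI conjI allI impI)
    show "eventually (\<lambda>k::nat. True) at_top" by simp
    show "eventually (\<lambda>r. 0 < r \<and> r < (1::real)) (at_left 1)"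
      unfolding eventually_at_left_field by (rule exI[of _ 0]) auto
    fix k r assume r: "0 < r \<and> r < (1::real)"
    have "r * r \<le> 1" using r by (intro mult_le_one) auto
    then have "sg * (r * r) \<le> sg" by (rule mult_left_le[OF _ sg(1)])
    then have "sg * r * r \<le> sg" by (simp add: mult.assoc)
    then have p: "(sg * r * r) ^ k \<le> sg ^ k" using r sg by (intro power_mono) auto
    have "norm (a k r) = norm (tc phi k) * norm (tc u k) * (sg * r * r) ^ k"
      using r sg by (simp add: a_def norm_mult norm_power)
    also have "\<dots> \<le> M / (2 * pi) * K * sg ^ k"
      using tp[of k] tu[of k] p r sg M0 K0 MK0 by (intro mult_mono) auto
    finally show "case (k, r) of (k, r) \<Rightarrow> norm (a k r) \<le> M / (2 * pi) * K * sg ^ k" by simp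
  qed
  have summ: "summable (\<lambda>k. M / (2 * pi) * K * sg ^ k)"
    using sg by (intro summable_mult summable_geometric) simp
  have T: "((\<lambda>r. \<Sum>k. a k r) \<longlongrightarrow> (\<Sum>k. b k)) (at_left 1)"
    using tannerys_theorem[OF lim bnd summ] by simp
  have ev: "eventually (\<lambda>r. (\<Sum>k. a k r) = circle_mean r (\<lambda>z. phi (of_real sg * z) * cnj (u z))) (at_left (1::real))"
    unfolding eventually_at_left_field
  proof (intro exI[of _ 0] conjI allI impI)
    fix r :: real assume "0 < r" "r < 1"
    then show "(\<Sum>k. a k r) = circle_mean r (\<lambda>z. phi (of_real sg * z) * cnj (u z))"
      unfolding a_def using dil_series[OF hphi hu sg, of r] by (simp add: sums_iff)
  qed simp
  show ?thesis using Lim_transform_eventually[OF T ev] by blast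
qed

lemma pairing_exists:
  fixes phi u :: "complex \<Rightarrow> complex"
  assumes hphi: "phi holomorphic_on ball 0 1"
    and M: "\<And>r. 0 \<le> r \<Longrightarrow> r < 1 \<Longrightarrow> integral {0..2*pi} (\<lambda>t. norm (phi (of_real r * cis t))) \<le> M"
    and hu: "u holomorphic_on ball 0 1" and K: "\<And>z. z \<in> ball 0 1 \<Longrightarrow> norm (u z) \<le> K"
  shows "\<exists>L. ((\<lambda>r. circle_mean r (\<lambda>z. phi z * cnj (u z))) \<longlongrightarrow> L) (at_left 1)"
proof (rule limit_from_approx)
  fix e :: real assume e: "e > 0"
  have "norm (u 0) \<le> K" using K[of 0] by simp
  then have K0: "0 \<le> K" by (rule order_trans[OF norm_ge_zero])
  define eta where "eta = 2 * pi * e / (K + 1)"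
  have eta: "eta > 0" using e K0 by (simp add: eta_def)
  obtain s0 where s0: "s0 < 1" and s0': "\<And>sg r. s0 < sg \<Longrightarrow> sg < 1 \<Longrightarrow> 0 \<le> r \<Longrightarrow> r < 1 \<Longrightarrow>
     integral {0..2*pi} (\<lambda>t. norm (phi (of_real r * cis t) - phi (of_real (sg * r) * cis t))) \<le> eta"
    using riesz_R[OF hphi M eta] by blast
  define sg where "sg = (max 0 s0 + 1) / 2"
  have sg: "0 \<le> sg" "sg < 1" "s0 < sg" using s0 by (auto simp: sg_def)
  obtain L where L: "((\<lambda>r. circle_mean r (\<lambda>z. phi (of_real sg * z) * cnj (u z))) \<longlongrightarrow> L) (at_left 1)"
    using dil_limit[OF hphi M hu K sg(1,2)] by blast
  have "norm (circle_mean r (\<lambda>z. phi z * cnj (u z)) - circle_mean r (\<lambda>z. phi (of_real sg * z) * cnj (u z))) \<le> e"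
    if r: "0 < r" "r < 1" for r
  proof -
    have r0: "0 \<le> r" using r by simp
    have hd: "(\<lambda>z. phi z - phi (of_real sg * z)) holomorphic_on ball 0 1"
      by (intro holomorphic_intros hphi hol_dil[OF hphi]) (use sg in auto)
    have c1: "continuous_on {0..2*pi} (\<lambda>t. phi (of_real r * cis t) * cnj (u (of_real r * cis t)))"
      by (intro continuous_intros cont_circ[OF hphi r0 r(2)] cont_circ[OF hu r0 r(2)])
    have c2: "continuous_on {0..2*pi} (\<lambda>t. phi (of_real sg * (of_real r * cis t)) * cnj (u (of_real r * cis t)))"
      by (intro continuous_intros cont_circ[OF hol_dil[OF hphi sg(1) less_imp_le[OF sg(2)]] r0 r(2)] cont_circ[OF hu r0 r(2)])
    have "circle_mean r (\<lambda>z. phi z * cnj (u z)) - circle_mean r (\<lambda>z. phi (of_real sg * z) * cnj (u z))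
        = circle_mean r (\<lambda>z. phi z * cnj (u z) - phi (of_real sg * z) * cnj (u z))"
      by (rule cm_diff[symmetric]) (use c1 c2 in auto)
    also have "\<dots> = circle_mean r (\<lambda>z. (phi z - phi (of_real sg * z)) * cnj (u z))"
      by (simp add: algebra_simps)
    finally have eq: "circle_mean r (\<lambda>z. phi z * cnj (u z)) - circle_mean r (\<lambda>z. phi (of_real sg * z) * cnj (u z))
        = circle_mean r (\<lambda>z. (phi z - phi (of_real sg * z)) * cnj (u z))" .
    have "norm (circle_mean r (\<lambda>z. (phi z - phi (of_real sg * z)) * cnj (u z)))
        \<le> K * integral {0..2*pi} (\<lambda>t. norm (phi (of_real r * cis t) - phi (of_real sg * (of_real r * cis t)))) / (2 * pi)"
      by (rule cm_bound[OF hd hu r0 r(2)]) (use r in \<open>auto intro!: K simp: norm_mult\<close>)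
    also have "integral {0..2*pi} (\<lambda>t. norm (phi (of_real r * cis t) - phi (of_real sg * (of_real r * cis t))))
        = integral {0..2*pi} (\<lambda>t. norm (phi (of_real r * cis t) - phi (of_real (sg * r) * cis t)))"
      by (simp add: mult.assoc)
    also have "K * \<dots> / (2 * pi) \<le> K * eta / (2 * pi)"
      using s0'[OF sg(3) sg(2) r0 r(2)] K0 by (intro divide_right_mono mult_left_mono) auto
    also have "\<dots> = K * (e / (K + 1))" by (simp add: eta_def)
    also have "\<dots> \<le> e"
    proof -
      have "K \<le> K + 1" by simp
      then have "K * e \<le> (K + 1) * e" using e by (intro mult_right_mono) auto
      then show ?thesis using K0 by (simp add: field_simps)
    qed
    finally show ?thesis unfolding eq by simp
  qed
  then show "\<exists>Q L. (Q \<longlongrightarrow> L) (at_left 1) \<and> (\<forall>r. 0 < r \<and> r < 1 \<longrightarrow> norm (circle_mean r (\<lambda>z. phi z * cnj (u z)) - Q r) \<le> e)"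
    using L by blast
qed


lemma bound_nonneg:
  fixes u :: "complex \<Rightarrow> complex"
  assumes K: "\<And>z. z \<in> ball 0 1 \<Longrightarrow> norm (u z) \<le> K"
  shows "0 \<le> K"
proof -
  have "norm (u 0) \<le> K" using K[of 0] by simp
  then show ?thesis by (rule order_trans[OF norm_ge_zero])
qed

lemma H1_M_nonneg:
  fixes phi :: "complex \<Rightarrow> complex"
  assumes M: "\<And>r. 0 \<le> r \<Longrightarrow> r < 1 \<Longrightarrow> integral {0..2*pi} (\<lambda>t. norm (phi (of_real r * cis t))) \<le> M"
  shows "0 \<le> M"
proof -
  have "0 \<le> integral {0..2*pi} (\<lambda>t. norm (phi (of_real 0 * cis t)))"
    by (rule integral_nonneg) auto
  also have "\<dots> \<le> M" by (rule M) auto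
  finally show ?thesis .
qed

lemma cp_tendsto:
  fixes phi u :: "complex \<Rightarrow> complex"
  assumes hphi: "phi holomorphic_on ball 0 1"
    and M: "\<And>r. 0 \<le> r \<Longrightarrow> r < 1 \<Longrightarrow> integral {0..2*pi} (\<lambda>t. norm (phi (of_real r * cis t))) \<le> M"
    and hu: "u holomorphic_on ball 0 1" and K: "\<And>z. z \<in> ball 0 1 \<Longrightarrow> norm (u z) \<le> K"
  shows "((\<lambda>r. circle_mean r (\<lambda>z. phi z * cnj (u z))) \<longlongrightarrow> cauchy_pairing phi u) (at_left 1)"
proof -
  obtain L where L: "((\<lambda>r. circle_mean r (\<lambda>z. phi z * cnj (u z))) \<longlongrightarrow> L) (at_left 1)"
    using pairing_exists[OF hphi M hu K] by blast
  have "cauchy_pairing phi u = L" unfolding cauchy_pairing_def by (rule tendsto_Lim[OF _ L]) simp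
  then show ?thesis using L by simp
qed

lemma ev01: "eventually (\<lambda>r. 0 < r \<and> r < (1::real)) (at_left 1)"
  unfolding eventually_at_left_field by (rule exI[of _ 0]) auto

lemma cp_bound:
  fixes phi u :: "complex \<Rightarrow> complex"
  assumes hphi: "phi holomorphic_on ball 0 1"
    and M: "\<And>r. 0 \<le> r \<Longrightarrow> r < 1 \<Longrightarrow> integral {0..2*pi} (\<lambda>t. norm (phi (of_real r * cis t))) \<le> M"
    and hu: "u holomorphic_on ball 0 1" and K: "\<And>z. z \<in> ball 0 1 \<Longrightarrow> norm (u z) \<le> K"
    and B: "\<And>r. 0 < r \<Longrightarrow> r < 1 \<Longrightarrow> norm (circle_mean r (\<lambda>z. phi z * cnj (u z))) \<le> e"
  shows "norm (cauchy_pairing phi u) \<le> e"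
proof -
  have "((\<lambda>r. norm (circle_mean r (\<lambda>z. phi z * cnj (u z)))) \<longlongrightarrow> norm (cauchy_pairing phi u)) (at_left 1)"
    by (intro tendsto_intros cp_tendsto[OF hphi M hu K])
  moreover have "eventually (\<lambda>r. norm (circle_mean r (\<lambda>z. phi z * cnj (u z))) \<le> e) (at_left 1)"
    using ev01 by eventually_elim (use B in auto)
  ultimately show ?thesis by (rule tendsto_upperbound) simp
qed

lemma cp_diff:
  fixes phi u1 u2 :: "complex \<Rightarrow> complex"
  assumes hphi: "phi holomorphic_on ball 0 1"
    and M: "\<And>r. 0 \<le> r \<Longrightarrow> r < 1 \<Longrightarrow> integral {0..2*pi} (\<lambda>t. norm (phi (of_real r * cis t))) \<le> M"
    and hu1: "u1 holomorphic_on ball 0 1" and K1: "\<And>z. z \<in> ball 0 1 \<Longrightarrow> norm (u1 z) \<le> K1"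
    and hu2: "u2 holomorphic_on ball 0 1" and K2: "\<And>z. z \<in> ball 0 1 \<Longrightarrow> norm (u2 z) \<le> K2"
  shows "cauchy_pairing phi (\<lambda>z. u1 z - u2 z) = cauchy_pairing phi u1 - cauchy_pairing phi u2"
proof -
  have hd: "(\<lambda>z. u1 z - u2 z) holomorphic_on ball 0 1" by (intro holomorphic_intros hu1 hu2)
  have Kd: "norm (u1 z - u2 z) \<le> K1 + K2" if "z \<in> ball 0 1" for z
    using norm_triangle_ineq4[of "u1 z" "u2 z"] K1[OF that] K2[OF that] by simp
  have L: "((\<lambda>r. circle_mean r (\<lambda>z. phi z * cnj (u1 z)) - circle_mean r (\<lambda>z. phi z * cnj (u2 z)))
      \<longlongrightarrow> cauchy_pairing phi u1 - cauchy_pairing phi u2) (at_left 1)"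
    by (intro tendsto_intros cp_tendsto[OF hphi M hu1 K1] cp_tendsto[OF hphi M hu2 K2])
  have ev: "eventually (\<lambda>r. circle_mean r (\<lambda>z. phi z * cnj (u1 z)) - circle_mean r (\<lambda>z. phi z * cnj (u2 z))
      = circle_mean r (\<lambda>z. phi z * cnj (u1 z - u2 z))) (at_left 1)"
    using ev01
  proof eventually_elim
    case (elim r)
    then have r0: "0 \<le> r" "r < 1" by auto
    have "circle_mean r (\<lambda>z. phi z * cnj (u1 z) - phi z * cnj (u2 z))
        = circle_mean r (\<lambda>z. phi z * cnj (u1 z)) - circle_mean r (\<lambda>z. phi z * cnj (u2 z))"
      by (rule cm_diff) (intro continuous_intros cont_circ[OF hphi r0] cont_circ[OF hu1 r0] cont_circ[OF hu2 r0])+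
    moreover have "(\<lambda>z. phi z * cnj (u1 z) - phi z * cnj (u2 z)) = (\<lambda>z. phi z * cnj (u1 z - u2 z))"
      by (simp add: algebra_simps)
    ultimately show ?case by simp
  qed
  have "((\<lambda>r. circle_mean r (\<lambda>z. phi z * cnj (u1 z - u2 z))) \<longlongrightarrow> cauchy_pairing phi u1 - cauchy_pairing phi u2) (at_left 1)"
    by (rule Lim_transform_eventually[OF L ev])
  then show ?thesis unfolding cauchy_pairing_def by (intro tendsto_Lim) simp_all
qed

lemma aux_bound:
  fixes Kf M e :: real
  assumes "0 \<le> Kf" "0 \<le> M" "0 < e"
  shows "Kf * (e / ((Kf + 1) * (M + 1))) * M \<le> e"
proof -
  have D: "0 < (Kf + 1) * (M + 1)" using assms by simp
  have "Kf * M \<le> (Kf + 1) * (M + 1)" using assms by (intro mult_mono) auto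
  then have q: "Kf * M / ((Kf + 1) * (M + 1)) \<le> 1" using D by simp
  have "Kf * (e / ((Kf + 1) * (M + 1))) * M = (Kf * M / ((Kf + 1) * (M + 1))) * e" by simp
  also have "\<dots> \<le> 1 * e" using q assms by (intro mult_right_mono) auto
  finally show ?thesis by simp
qed

lemma cm_swap:
  fixes phi w :: "complex \<Rightarrow> complex"
  assumes hphi: "phi holomorphic_on ball 0 1" and hw: "w holomorphic_on ball 0 1"
    and sg: "0 \<le> sg" "sg < 1" and r: "0 \<le> r" "r < 1"
  shows "circle_mean r (\<lambda>z. phi (of_real sg * z) * cnj (w z)) = circle_mean r (\<lambda>z. phi z * cnj (w (of_real sg * z)))"
proof -
  have a: "0 \<le> sg * r" "sg * r < 1" using sg r by (auto intro: le_less_trans[OF mult_left_le_one_le])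
  have S1: "(\<lambda>k. tc phi k * cnj (tc w k) * of_real (sg * r * r) ^ k) sums
           circle_mean r (\<lambda>z. phi (of_real sg * z) * cnj (w z))"
    by (rule dil_series[OF hphi hw sg r])
  have S: "(\<lambda>k. 2 * pi * (tc phi k * cnj (tc w k) * of_real (r * (sg * r)) ^ k)) sums
           integral {0..2*pi} (\<lambda>t. phi (of_real r * cis t) * cnj (w (of_real (sg * r) * cis t)))"
    by (rule pairing_series[OF hphi r hw a])
  have "(\<lambda>k. 2 * pi * (tc phi k * cnj (tc w k) * of_real (r * (sg * r)) ^ k) / of_real (2 * pi)) sums
           (integral {0..2*pi} (\<lambda>t. phi (of_real r * cis t) * cnj (w (of_real (sg * r) * cis t))) / of_real (2 * pi))"
    by (rule sums_divide[OF S])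
  then have S2: "(\<lambda>k. tc phi k * cnj (tc w k) * of_real (sg * r * r) ^ k) sums
           circle_mean r (\<lambda>z. phi z * cnj (w (of_real sg * z)))"
    by (simp add: cm_alt mult.assoc mult.left_commute)
  show ?thesis using sums_unique2[OF S1 S2] .
qed

lemma AP1:
  fixes phi f h :: "complex \<Rightarrow> complex"
  assumes hphi: "phi holomorphic_on ball 0 1"
    and M: "\<And>r. 0 \<le> r \<Longrightarrow> r < 1 \<Longrightarrow> integral {0..2*pi} (\<lambda>t. norm (phi (of_real r * cis t))) \<le> M"
    and hf: "f holomorphic_on ball 0 1" and Kf: "\<And>z. z \<in> ball 0 1 \<Longrightarrow> norm (f z) \<le> Kf"
    and hh: "h holomorphic_on ball 0 1" and Kh: "\<And>z. z \<in> ball 0 1 \<Longrightarrow> norm (h z) \<le> Kh"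
    and e: "e > 0"
  shows "eventually (\<lambda>rho. norm (cauchy_pairing phi (\<lambda>z. f z * h z) - cauchy_pairing phi (\<lambda>z. f z * h (of_real rho * z))) \<le> e) (at_left 1)"
proof -
  have Kf0: "0 \<le> Kf" by (rule bound_nonneg[OF Kf])
  have Kh0: "0 \<le> Kh" by (rule bound_nonneg[OF Kh])
  have M0: "0 \<le> M" by (rule H1_M_nonneg[OF M])
  define Kw where "Kw = 2 * Kf * Kh"
  have Kw0: "0 \<le> Kw" using Kf0 Kh0 by (simp add: Kw_def)
  define eta where "eta = pi * e / (Kw + 1)"
  have eta: "eta > 0" using e Kw0 by (simp add: eta_def)
  obtain s0 where s0: "s0 < 1" and s0': "\<And>sg r. s0 < sg \<Longrightarrow> sg < 1 \<Longrightarrow> 0 \<le> r \<Longrightarrow> r < 1 \<Longrightarrow>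
     integral {0..2*pi} (\<lambda>t. norm (phi (of_real r * cis t) - phi (of_real (sg * r) * cis t))) \<le> eta"
    using riesz_R[OF hphi M eta] by blast
  define sg where "sg = (max 0 s0 + 1) / 2"
  have sg: "0 \<le> sg" "sg < 1" "s0 < sg" using s0 by (auto simp: sg_def)
  define ep where "ep = e / ((Kf + 1) * (M + 1))"
  have ep: "ep > 0" using e Kf0 M0 by (simp add: ep_def)
  have ucont: "uniformly_continuous_on (cball 0 sg) h"
    by (rule compact_uniformly_continuous[OF holomorphic_on_imp_continuous_on[OF holomorphic_on_subset[OF hh]] compact_cball])
       (use sg in auto)
  then have "\<exists>d>0. \<forall>x\<in>cball 0 sg. \<forall>y\<in>cball 0 sg. dist y x < d \<longrightarrow> dist (h y) (h x) < ep"
    unfolding uniformly_continuous_on_def using ep by blast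
  then obtain d where d: "d > 0" and dh: "\<And>x y. x \<in> cball 0 sg \<Longrightarrow> y \<in> cball 0 sg \<Longrightarrow> dist y x < d \<Longrightarrow> dist (h y) (h x) < ep"
    by blast
  have main: "norm (cauchy_pairing phi (\<lambda>z. f z * h z) - cauchy_pairing phi (\<lambda>z. f z * h (of_real rho * z))) \<le> e"
    if rho: "max 0 (1 - d) < rho" "rho < 1" for rho
  proof -
    have rho0: "0 \<le> rho" "rho \<le> 1" using rho by auto
    define w where "w = (\<lambda>z. f z * h z - f z * h (of_real rho * z))"
    have hhr: "(\<lambda>z. h (of_real rho * z)) holomorphic_on ball 0 1" by (rule hol_dil[OF hh rho0])
    have hw: "w holomorphic_on ball 0 1" unfolding w_def by (intro holomorphic_intros hf hh hhr)
    have Kw: "norm (w z) \<le> Kw" if z: "z \<in> ball 0 1" for z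
    proof -
      have z': "of_real rho * z \<in> ball 0 1" by (rule dil_in_ball[OF rho0 z])
      have "w z = f z * (h z - h (of_real rho * z))" by (simp add: w_def right_diff_distrib)
      then have "norm (w z) = norm (f z) * norm (h z - h (of_real rho * z))" by (simp add: norm_mult)
      also have "\<dots> \<le> Kf * (Kh + Kh)"
        using Kf[OF z] Kh[OF z] Kh[OF z'] norm_triangle_ineq4[of "h z" "h (of_real rho * z)"] Kf0
        by (intro mult_mono) auto
      finally show ?thesis by (simp add: Kw_def)
    qed
    have hfh: "(\<lambda>z. f z * h z) holomorphic_on ball 0 1" by (intro holomorphic_intros hf hh)
    have hfhr: "(\<lambda>z. f z * h (of_real rho * z)) holomorphic_on ball 0 1" by (intro holomorphic_intros hf hhr)
    have Kfh: "norm (f z * h z) \<le> Kf * Kh" if "z \<in> ball 0 1" for z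
      using Kf[OF that] Kh[OF that] Kf0 by (simp add: norm_mult mult_mono)
    have Kfhr: "norm (f z * h (of_real rho * z)) \<le> Kf * Kh" if "z \<in> ball 0 1" for z
      using Kf[OF that] Kh[OF dil_in_ball[OF rho0 that]] Kf0 by (simp add: norm_mult mult_mono)
    have eqd: "cauchy_pairing phi (\<lambda>z. f z * h z) - cauchy_pairing phi (\<lambda>z. f z * h (of_real rho * z)) = cauchy_pairing phi w"
      unfolding w_def by (rule cp_diff[OF hphi M hfh Kfh hfhr Kfhr, symmetric])
    have "norm (cauchy_pairing phi w) \<le> e"
    proof (rule cp_bound[OF hphi M hw Kw])
      fix r :: real assume r: "0 < r" "r < 1"
      have r0: "0 \<le> r" using r by simp
      have hphis: "(\<lambda>z. phi (of_real sg * z)) holomorphic_on ball 0 1" by (rule hol_dil[OF hphi sg(1) less_imp_le[OF sg(2)]])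
      have hd: "(\<lambda>z. phi z - phi (of_real sg * z)) holomorphic_on ball 0 1" by (intro holomorphic_intros hphi hphis)
      have c1: "continuous_on {0..2*pi} (\<lambda>t. (phi (of_real r * cis t) - phi (of_real sg * (of_real r * cis t))) * cnj (w (of_real r * cis t)))"
        by (intro continuous_intros cont_circ[OF hd r0 r(2)] cont_circ[OF hw r0 r(2)])
      have c2: "continuous_on {0..2*pi} (\<lambda>t. phi (of_real sg * (of_real r * cis t)) * cnj (w (of_real r * cis t)))"
        by (intro continuous_intros cont_circ[OF hphis r0 r(2)] cont_circ[OF hw r0 r(2)])
      have "circle_mean r (\<lambda>z. phi z * cnj (w z))
          = circle_mean r (\<lambda>z. (phi z - phi (of_real sg * z)) * cnj (w z) + phi (of_real sg * z) * cnj (w z))"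
        by (simp add: algebra_simps)
      also have "\<dots> = circle_mean r (\<lambda>z. (phi z - phi (of_real sg * z)) * cnj (w z)) + circle_mean r (\<lambda>z. phi (of_real sg * z) * cnj (w z))"
      proof -
        have "integral {0..2*pi} (\<lambda>t. (phi (of_real r * cis t) - phi (of_real sg * (of_real r * cis t))) * cnj (w (of_real r * cis t))
                + phi (of_real sg * (of_real r * cis t)) * cnj (w (of_real r * cis t)))
            = integral {0..2*pi} (\<lambda>t. (phi (of_real r * cis t) - phi (of_real sg * (of_real r * cis t))) * cnj (w (of_real r * cis t)))
              + integral {0..2*pi} (\<lambda>t. phi (of_real sg * (of_real r * cis t)) * cnj (w (of_real r * cis t)))"
          by (rule integral_add) (use c1 c2 in \<open>auto intro: integrable_continuous_real\<close>)
        then show ?thesis by (simp add: cm_alt add_divide_distrib)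
      qed
      also have "circle_mean r (\<lambda>z. phi (of_real sg * z) * cnj (w z)) = circle_mean r (\<lambda>z. phi z * cnj (w (of_real sg * z)))"
        by (rule cm_swap[OF hphi hw sg(1,2) r0 r(2)])
      finally have split: "circle_mean r (\<lambda>z. phi z * cnj (w z))
          = circle_mean r (\<lambda>z. (phi z - phi (of_real sg * z)) * cnj (w z)) + circle_mean r (\<lambda>z. phi z * cnj (w (of_real sg * z)))" .
      have b1: "norm (circle_mean r (\<lambda>z. (phi z - phi (of_real sg * z)) * cnj (w z))) \<le> e / 2"
      proof -
        have "norm (circle_mean r (\<lambda>z. (phi z - phi (of_real sg * z)) * cnj (w z)))
            \<le> Kw * integral {0..2*pi} (\<lambda>t. norm (phi (of_real r * cis t) - phi (of_real sg * (of_real r * cis t)))) / (2 * pi)"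
          by (rule cm_bound[OF hd hw r0 r(2)]) (use r in \<open>auto intro!: Kw simp: norm_mult\<close>)
        also have "integral {0..2*pi} (\<lambda>t. norm (phi (of_real r * cis t) - phi (of_real sg * (of_real r * cis t))))
            = integral {0..2*pi} (\<lambda>t. norm (phi (of_real r * cis t) - phi (of_real (sg * r) * cis t)))"
          by (simp add: mult.assoc)
        also have "Kw * \<dots> / (2 * pi) \<le> Kw * eta / (2 * pi)"
          using s0'[OF sg(3) sg(2) r0 r(2)] Kw0 by (intro divide_right_mono mult_left_mono) auto
        also have "\<dots> = Kw * (e / (Kw + 1)) / 2" by (simp add: eta_def)
        also have "\<dots> \<le> e / 2"
        proof -
          have "Kw * e \<le> (Kw + 1) * e" using e by (intro mult_right_mono) auto
          then show ?thesis using Kw0 by (simp add: field_simps)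
        qed
        finally show ?thesis .
      qed
      have hws: "(\<lambda>z. w (of_real sg * z)) holomorphic_on ball 0 1" by (rule hol_dil[OF hw sg(1) less_imp_le[OF sg(2)]])
      have b2: "norm (circle_mean r (\<lambda>z. phi z * cnj (w (of_real sg * z)))) \<le> e / 2"
      proof -
        have wb: "norm (w (of_real sg * (of_real r * cis t))) \<le> Kf * ep" for t
        proof -
          define x where "x = of_real sg * (of_real r * cis t)"
          have nx: "norm x = sg * r" using sg r by (simp add: x_def norm_mult)
          have nx1: "norm x \<le> sg" unfolding nx using sg(1) r by (intro mult_left_le) auto
          have xb: "x \<in> ball 0 1" using nx1 sg by simp
          have xc: "x \<in> cball 0 sg" using nx1 by simp
          have "rho * norm x \<le> norm x" using rho0 by (intro mult_left_le_one_le) auto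
          then have yc: "of_real rho * x \<in> cball 0 sg" using nx1 rho0 by (simp add: norm_mult)
          have "x - of_real rho * x = of_real (1 - rho) * x" by (simp add: algebra_simps)
          then have "dist (of_real rho * x) x = norm (of_real (1 - rho) * x)"
            by (simp add: dist_norm norm_minus_commute)
          also have "\<dots> = \<bar>1 - rho\<bar> * norm x" by (simp only: norm_mult norm_of_real)
          also have "\<dots> = (1 - rho) * norm x" using rho0 by simp
          finally have "dist (of_real rho * x) x = (1 - rho) * norm x" .
          also have "\<dots> \<le> (1 - rho) * 1" using rho0 nx1 sg by (intro mult_left_mono) auto
          also have "\<dots> < d" using rho by simp
          finally have "dist (h (of_real rho * x)) (h x) < ep" by (rule dh[OF xc yc])
          then have hd': "norm (h x - h (of_real rho * x)) \<le> ep" by (simp add: dist_norm norm_minus_commute)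
          have "w x = f x * (h x - h (of_real rho * x))" by (simp add: w_def right_diff_distrib)
          then have "norm (w x) = norm (f x) * norm (h x - h (of_real rho * x))" by (simp add: norm_mult)
          also have "\<dots> \<le> Kf * ep" using Kf[OF xb] hd' Kf0 by (intro mult_mono) auto
          finally show ?thesis by (simp add: x_def)
        qed
        have "norm (circle_mean r (\<lambda>z. phi z * cnj (w (of_real sg * z))))
            \<le> (Kf * ep) * integral {0..2*pi} (\<lambda>t. norm (phi (of_real r * cis t))) / (2 * pi)"
          by (rule cm_bound[OF hphi hws r0 r(2)]) (rule wb)
        also have "\<dots> \<le> (Kf * ep) * M / (2 * pi)"
          using M[OF r0 r(2)] Kf0 ep by (intro divide_right_mono mult_left_mono) auto
        also have "\<dots> \<le> (Kf * ep) * M / 2"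
          using Kf0 ep M0 pi_ge_two by (intro divide_left_mono mult_nonneg_nonneg) auto
        also have "\<dots> \<le> e / 2"
          using aux_bound[OF Kf0 M0 e] by (simp add: ep_def)
        finally show ?thesis .
      qed
      have "norm (circle_mean r (\<lambda>z. phi z * cnj (w z)))
          \<le> norm (circle_mean r (\<lambda>z. (phi z - phi (of_real sg * z)) * cnj (w z))) + norm (circle_mean r (\<lambda>z. phi z * cnj (w (of_real sg * z))))"
        unfolding split by (rule norm_triangle_ineq)
      also have "\<dots> \<le> e" using b1 b2 by simp
      finally show "norm (circle_mean r (\<lambda>z. phi z * cnj (w z))) \<le> e" .
    qed
    then show ?thesis unfolding eqd .
  qed
  show ?thesis
    unfolding eventually_at_left_field
    by (rule exI[of _ "max 0 (1 - d)"]) (use d main in auto)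
qed


lemma tail_bound:
  fixes h :: "complex \<Rightarrow> complex"
  assumes hh: "h holomorphic_on ball 0 1" and Kh: "\<And>z. z \<in> ball 0 1 \<Longrightarrow> norm (h z) \<le> Kh"
    and rho: "0 \<le> rho" "rho < 1" and z: "z \<in> ball 0 1"
  shows "norm (h (of_real rho * z) - (\<Sum>k<N. tc h k * of_real rho ^ k * z ^ k)) \<le> Kh * rho ^ N / (1 - rho)"
proof -
  have nz: "norm z < 1" using z by simp
  have rz: "norm (of_real rho * z) < 1" using rho nz by (simp add: norm_mult mult_le_less_imp_less le_less_trans[OF mult_left_le_one_le])
  have S: "(\<lambda>k. tc h k * (of_real rho * z) ^ k) sums h (of_real rho * z)"
    by (rule tc_sums[OF hh rz])
  have S2: "(\<lambda>k. tc h (k + N) * (of_real rho * z) ^ (k + N)) sums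
      (h (of_real rho * z) - (\<Sum>k<N. tc h k * (of_real rho * z) ^ k))"
    using sums_split_initial_segment[OF S, of N] by simp
  have eqT: "(\<Sum>k<N. tc h k * (of_real rho * z) ^ k) = (\<Sum>k<N. tc h k * of_real rho ^ k * z ^ k)"
    by (simp add: power_mult_distrib mult.assoc)
  have tk: "norm (tc h k) \<le> Kh" for k by (rule tc_Hinf_bound[OF hh Kh])
  have Kh0: "0 \<le> Kh" using tk[of 0] by (rule order_trans[OF norm_ge_zero])
  have le: "norm (tc h (k + N) * (of_real rho * z) ^ (k + N)) \<le> Kh * rho ^ N * rho ^ k" for k
  proof -
    have "norm ((of_real rho * z) ^ (k + N)) = (rho * norm z) ^ (k + N)" using rho by (simp add: norm_mult norm_power)
    also have "\<dots> \<le> rho ^ (k + N)" using rho nz by (intro power_mono mult_left_le) auto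
    finally have A: "norm ((of_real rho * z) ^ (k + N)) \<le> rho ^ (k + N)" .
    have "norm (tc h (k + N)) * norm ((of_real rho * z) ^ (k + N)) \<le> Kh * rho ^ (k + N)"
      using tk[of "k + N"] A Kh0 by (intro mult_mono) auto
    then have "norm (tc h (k + N) * (of_real rho * z) ^ (k + N)) \<le> Kh * rho ^ (k + N)"
      by (simp only: norm_mult)
    then show ?thesis by (simp add: power_add mult_ac)
  qed
  have G: "(\<lambda>k. Kh * rho ^ N * rho ^ k) sums (Kh * rho ^ N * (1 / (1 - rho)))"
    using rho by (intro sums_mult geometric_sums) simp
  have sn: "summable (\<lambda>k. norm (tc h (k + N) * (of_real rho * z) ^ (k + N)))"
    by (rule summable_comparison_test[OF _ sums_summable[OF G]]) (use le in auto)
  have "norm (h (of_real rho * z) - (\<Sum>k<N. tc h k * (of_real rho * z) ^ k))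
      = norm (\<Sum>k. tc h (k + N) * (of_real rho * z) ^ (k + N))" using sums_unique[OF S2] by simp
  also have "\<dots> \<le> (\<Sum>k. norm (tc h (k + N) * (of_real rho * z) ^ (k + N)))" by (rule summable_norm[OF sn])
  also have "\<dots> \<le> (\<Sum>k. Kh * rho ^ N * rho ^ k)" by (rule suminf_le[OF le sn sums_summable[OF G]])
  also have "\<dots> = Kh * rho ^ N / (1 - rho)" using sums_unique[OF G] by simp
  finally show ?thesis unfolding eqT .
qed

lemma AP2:
  fixes phi f h :: "complex \<Rightarrow> complex"
  assumes hphi: "phi holomorphic_on ball 0 1"
    and M: "\<And>r. 0 \<le> r \<Longrightarrow> r < 1 \<Longrightarrow> integral {0..2*pi} (\<lambda>t. norm (phi (of_real r * cis t))) \<le> M"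
    and hf: "f holomorphic_on ball 0 1" and Kf: "\<And>z. z \<in> ball 0 1 \<Longrightarrow> norm (f z) \<le> Kf"
    and hh: "h holomorphic_on ball 0 1" and Kh: "\<And>z. z \<in> ball 0 1 \<Longrightarrow> norm (h z) \<le> Kh"
    and rho: "0 \<le> rho" "rho < 1" and e: "e > 0"
  shows "eventually (\<lambda>N. norm (cauchy_pairing phi (\<lambda>z. f z * h (of_real rho * z))
            - cauchy_pairing phi (\<lambda>z. f z * (\<Sum>k<N. tc h k * of_real rho ^ k * z ^ k))) \<le> e) sequentially"
proof -
  have Kf0: "0 \<le> Kf" by (rule bound_nonneg[OF Kf])
  have Kh0: "0 \<le> Kh" by (rule bound_nonneg[OF Kh])
  have M0: "0 \<le> M" by (rule H1_M_nonneg[OF M])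
  define c where "c = (\<lambda>N. Kf * (Kh * rho ^ N / (1 - rho)) * M / (2 * pi))"
  have "c \<longlonglongrightarrow> Kf * (Kh * 0 / (1 - rho)) * M / (2 * pi)"
    unfolding c_def using rho by (intro tendsto_intros LIMSEQ_power_zero) auto
  then have "c \<longlonglongrightarrow> 0" by simp
  then have evc: "eventually (\<lambda>N. c N < e) sequentially" using e by (rule order_tendstoD(2))
  have hhr: "(\<lambda>z. h (of_real rho * z)) holomorphic_on ball 0 1" by (rule hol_dil[OF hh rho(1) less_imp_le[OF rho(2)]])
  show ?thesis using evc
  proof eventually_elim
    case (elim N)
    define T where "T = (\<lambda>z. \<Sum>k<N. tc h k * of_real rho ^ k * z ^ k)"
    have hT: "T holomorphic_on ball 0 1" unfolding T_def by (intro holomorphic_intros)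
    have KT: "norm (T z) \<le> (\<Sum>k<N. norm (tc h k))" if "z \<in> ball 0 1" for z
    proof -
      have "norm (T z) \<le> (\<Sum>k<N. norm (tc h k * of_real rho ^ k * z ^ k))" unfolding T_def by (rule norm_sum)
      also have "\<dots> \<le> (\<Sum>k<N. norm (tc h k))"
      proof (rule sum_mono)
        fix k
        have "norm (of_real rho ^ k * z ^ k :: complex) \<le> 1"
          using rho that by (simp add: norm_mult norm_power power_le_one mult_le_one less_imp_le)
        then show "norm (tc h k * of_real rho ^ k * z ^ k) \<le> norm (tc h k)"
          by (simp add: norm_mult mult_left_le mult.assoc)
      qed
      finally show ?thesis .
    qed
    have hfh: "(\<lambda>z. f z * h (of_real rho * z)) holomorphic_on ball 0 1" by (intro holomorphic_intros hf hhr)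
    have hfT: "(\<lambda>z. f z * T z) holomorphic_on ball 0 1" by (intro holomorphic_intros hf hT)
    have Kfh: "norm (f z * h (of_real rho * z)) \<le> Kf * Kh" if "z \<in> ball 0 1" for z
      using Kf[OF that] Kh[OF dil_in_ball[OF rho(1) less_imp_le[OF rho(2)] that]] Kf0 by (simp add: norm_mult mult_mono)
    have KfT: "norm (f z * T z) \<le> Kf * (\<Sum>k<N. norm (tc h k))" if "z \<in> ball 0 1" for z
      using Kf[OF that] KT[OF that] Kf0 by (simp add: norm_mult mult_mono)
    have eqd: "cauchy_pairing phi (\<lambda>z. f z * h (of_real rho * z)) - cauchy_pairing phi (\<lambda>z. f z * T z)
        = cauchy_pairing phi (\<lambda>z. f z * h (of_real rho * z) - f z * T z)"
      by (rule cp_diff[OF hphi M hfh Kfh hfT KfT, symmetric])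
    define w where "w = (\<lambda>z. f z * h (of_real rho * z) - f z * T z)"
    have hw: "w holomorphic_on ball 0 1" unfolding w_def by (intro holomorphic_intros hf hhr hT)
    have Kw: "norm (w z) \<le> Kf * (Kh * rho ^ N / (1 - rho))" if z: "z \<in> ball 0 1" for z
    proof -
      have "w z = f z * (h (of_real rho * z) - T z)" by (simp add: w_def right_diff_distrib)
      then have "norm (w z) = norm (f z) * norm (h (of_real rho * z) - T z)" by (simp add: norm_mult)
      also have "\<dots> \<le> Kf * (Kh * rho ^ N / (1 - rho))"
        using Kf[OF z] tail_bound[OF hh Kh rho z, of N] Kf0 unfolding T_def by (intro mult_mono) auto
      finally show ?thesis .
    qed
    have Kw0: "0 \<le> Kf * (Kh * rho ^ N / (1 - rho))" using Kf0 Kh0 rho by simp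
    have "norm (cauchy_pairing phi w) \<le> c N"
    proof (rule cp_bound[OF hphi M hw Kw])
      fix r :: real assume r: "0 < r" "r < 1"
      have "norm (circle_mean r (\<lambda>z. phi z * cnj (w z)))
          \<le> Kf * (Kh * rho ^ N / (1 - rho)) * integral {0..2*pi} (\<lambda>t. norm (phi (of_real r * cis t))) / (2 * pi)"
        by (rule cm_bound[OF hphi hw _ r(2)], use r in simp, rule Kw, use r in \<open>simp add: norm_mult\<close>)
      also have "\<dots> \<le> c N" unfolding c_def
        using M[of r] r Kw0 by (intro divide_right_mono mult_left_mono) auto
      finally show "norm (circle_mean r (\<lambda>z. phi z * cnj (w z))) \<le> c N" .
    qed
    then show ?case using elim eqd unfolding w_def T_def by simp
  qed
qed

lemma poly_exists:
  fixes c :: "nat \<Rightarrow> complex"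
  shows "\<exists>p. \<forall>z. poly p z = (\<Sum>k<N. c k * z ^ k)"
proof (induction N)
  case 0 then show ?case by (intro exI[of _ 0]) simp
next
  case (Suc N)
  then obtain p where p: "\<forall>z. poly p z = (\<Sum>k<N. c k * z ^ k)" by blast
  show ?case by (intro exI[of _ "p + monom (c N) N"]) (simp add: p poly_monom)
qed

lemma poly_in_Hinf: "(\<lambda>z. poly p z) \<in> Hinf"
proof -
  have c: "continuous_on (cball 0 1) (\<lambda>z. poly p z)" by (intro continuous_intros)
  have "bounded ((\<lambda>z. poly p z) ` cball 0 1)"
    by (rule compact_imp_bounded[OF compact_continuous_image[OF c compact_cball]])
  then obtain B where B: "\<forall>x\<in>(\<lambda>z. poly p z) ` cball 0 1. norm x \<le> B"
    unfolding bounded_iff by blast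
  then have "\<forall>z\<in>ball 0 1. norm (poly p z) \<le> B" by auto
  moreover have "(\<lambda>z. poly p z) holomorphic_on ball 0 1" by (intro holomorphic_intros)
  ultimately show ?thesis unfolding Hinf_def by blast
qed


lemma H1_props:
  assumes "phi \<in> H1"
  shows "phi holomorphic_on ball 0 1"
    and "\<exists>M. \<forall>r. 0 \<le> r \<longrightarrow> r < 1 \<longrightarrow> integral {0..2*pi} (\<lambda>t. norm (phi (of_real r * cis t))) \<le> M"
proof -
  show "phi holomorphic_on ball 0 1" using assms by (simp add: H1_def)
  obtain C where C: "\<And>r. 0 \<le> r \<Longrightarrow> r < 1 \<Longrightarrow>
      integral {0..2*pi} (\<lambda>t. cmod (phi (complex_of_real r * cis t))) / (2*pi) \<le> C"
    using assms unfolding H1_def by blast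
  show "\<exists>M. \<forall>r. 0 \<le> r \<longrightarrow> r < 1 \<longrightarrow> integral {0..2*pi} (\<lambda>t. norm (phi (of_real r * cis t))) \<le> M"
  proof (intro exI[of _ "2 * pi * C"] allI impI)
    fix r :: real assume "0 \<le> r" "r < 1"
    then show "integral {0..2*pi} (\<lambda>t. norm (phi (of_real r * cis t))) \<le> 2 * pi * C"
      using C[of r] by (simp add: field_simps)
  qed
qed

lemma Hinf_props:
  assumes "h \<in> Hinf"
  obtains K where "h holomorphic_on ball 0 1" "\<And>z. z \<in> ball 0 1 \<Longrightarrow> norm (h z) \<le> K"
  using assms unfolding Hinf_def by blast

lemma wsc_mono:
  assumes "S \<subseteq> T"
  shows "weak_star_closure X N S \<subseteq> weak_star_closure X N T"
  using assms unfolding weak_star_closure_def by blast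

theorem proposition2p2:
  fixes X :: "(complex \<Rightarrow> complex) set" and N :: "(complex \<Rightarrow> complex) \<Rightarrow> real"
    and f :: "complex \<Rightarrow> complex"
  assumes "regular_fun_space X N" and "f \<in> Hinf"
  shows "weak_star_closure X N {(\<lambda>z. f z * h z) | h. h \<in> Hinf} = dual_invariant_subspace X N f"
proof
  have XH1: "X \<subseteq> H1" using assms(1) by (simp add: regular_fun_space_def)
  obtain Kf where hf: "f holomorphic_on ball 0 1" and Kf: "\<And>z. z \<in> ball 0 1 \<Longrightarrow> norm (f z) \<le> Kf"
    using Hinf_props[OF assms(2)] by blast
  show "dual_invariant_subspace X N f \<subseteq> weak_star_closure X N {(\<lambda>z. f z * h z) | h. h \<in> Hinf}"
    unfolding dual_invariant_subspace_def
  proof (rule wsc_mono)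
    show "{(\<lambda>z. p z * f z) | p. p \<in> analytic_polys} \<subseteq> {(\<lambda>z. f z * h z) | h. h \<in> Hinf}"
    proof
      fix s assume "s \<in> {(\<lambda>z. p z * f z) | p. p \<in> analytic_polys}"
      then obtain q where s: "s = (\<lambda>z. poly q z * f z)" by (auto simp: analytic_polys_def)
      have "s = (\<lambda>z. f z * poly q z)" unfolding s by (simp add: mult.commute)
      then show "s \<in> {(\<lambda>z. f z * h z) | h. h \<in> Hinf}" using poly_in_Hinf[of q] by blast
    qed
  qed
  show "weak_star_closure X N {(\<lambda>z. f z * h z) | h. h \<in> Hinf} \<subseteq> dual_invariant_subspace X N f"
  proof
    fix g assume g: "g \<in> weak_star_closure X N {(\<lambda>z. f z * h z) | h. h \<in> Hinf}"
    then have gX': "g \<in> cauchy_dual X N" by (simp add: weak_star_closure_def)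
    have gcl: "\<And>F e. finite F \<Longrightarrow> F \<subseteq> X \<Longrightarrow> e > 0 \<Longrightarrow>
        \<exists>s\<in>{(\<lambda>z. f z * h z) | h. h \<in> Hinf}. \<forall>phi\<in>F. norm (cauchy_pairing phi s - cauchy_pairing phi g) < e"
      using g by (simp add: weak_star_closure_def)
    show "g \<in> dual_invariant_subspace X N f"
      unfolding dual_invariant_subspace_def weak_star_closure_def
    proof (intro CollectI conjI gX' allI impI)
      fix F :: "(complex \<Rightarrow> complex) set" and e :: real
      assume Fe: "finite F \<and> F \<subseteq> X \<and> e > 0"
      then have finF: "finite F" and FX: "F \<subseteq> X" and e: "e > 0" by auto
      have e3: "e / 3 > 0" using e by simp
      obtain s where s: "s \<in> {(\<lambda>z. f z * h z) | h. h \<in> Hinf}"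
        and sg: "\<forall>phi\<in>F. norm (cauchy_pairing phi s - cauchy_pairing phi g) < e / 3"
        using gcl[OF finF FX e3] by blast
      obtain h where hH: "h \<in> Hinf" and sdef: "s = (\<lambda>z. f z * h z)" using s by blast
      obtain Kh where hh: "h holomorphic_on ball 0 1" and Kh: "\<And>z. z \<in> ball 0 1 \<Longrightarrow> norm (h z) \<le> Kh"
        using Hinf_props[OF hH] by blast
      have phiH: "phi holomorphic_on ball 0 1" if "phi \<in> F" for phi
        using H1_props(1)[of phi] that FX XH1 by blast
      have "\<forall>phi\<in>F. \<exists>M. \<forall>r. 0 \<le> r \<longrightarrow> r < 1 \<longrightarrow> integral {0..2*pi} (\<lambda>t. norm (phi (of_real r * cis t))) \<le> M"
        using H1_props(2) FX XH1 by blast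
      then obtain Mf where Mf: "\<And>phi r. phi \<in> F \<Longrightarrow> 0 \<le> r \<Longrightarrow> r < 1 \<Longrightarrow>
          integral {0..2*pi} (\<lambda>t. norm (phi (of_real r * cis t))) \<le> Mf phi"
        by metis
      have e4: "e / 4 > 0" using e by simp
      have "eventually (\<lambda>rho. \<forall>phi\<in>F. norm (cauchy_pairing phi (\<lambda>z. f z * h z)
              - cauchy_pairing phi (\<lambda>z. f z * h (of_real rho * z))) \<le> e / 4) (at_left 1)"
      proof (rule eventually_ball_finite[OF finF], intro ballI)
        fix phi assume phi: "phi \<in> F"
        show "eventually (\<lambda>rho. norm (cauchy_pairing phi (\<lambda>z. f z * h z)
              - cauchy_pairing phi (\<lambda>z. f z * h (of_real rho * z))) \<le> e / 4) (at_left 1)"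
          by (rule AP1[OF phiH[OF phi] Mf[OF phi] hf Kf hh Kh e4])
      qed
      then have "eventually (\<lambda>rho. (0 < rho \<and> rho < 1) \<and> (\<forall>phi\<in>F. norm (cauchy_pairing phi (\<lambda>z. f z * h z)
              - cauchy_pairing phi (\<lambda>z. f z * h (of_real rho * z))) \<le> e / 4)) (at_left 1)"
        using ev01 by (rule eventually_conj[rotated])
      then obtain rho where rho: "0 < rho" "rho < 1"
        and rhoF: "\<forall>phi\<in>F. norm (cauchy_pairing phi (\<lambda>z. f z * h z)
              - cauchy_pairing phi (\<lambda>z. f z * h (of_real rho * z))) \<le> e / 4"
        using eventually_happens'[OF trivial_limit_at_left_real] by blast
      have rho0: "0 \<le> rho" using rho by simp
      have "eventually (\<lambda>n. \<forall>phi\<in>F. norm (cauchy_pairing phi (\<lambda>z. f z * h (of_real rho * z))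
            - cauchy_pairing phi (\<lambda>z. f z * (\<Sum>k<n. tc h k * of_real rho ^ k * z ^ k))) \<le> e / 4) sequentially"
      proof (rule eventually_ball_finite[OF finF], intro ballI)
        fix phi assume phi: "phi \<in> F"
        show "eventually (\<lambda>n. norm (cauchy_pairing phi (\<lambda>z. f z * h (of_real rho * z))
            - cauchy_pairing phi (\<lambda>z. f z * (\<Sum>k<n. tc h k * of_real rho ^ k * z ^ k))) \<le> e / 4) sequentially"
          by (rule AP2[OF phiH[OF phi] Mf[OF phi] hf Kf hh Kh rho0 rho(2) e4])
      qed
      then obtain n where nF: "\<forall>phi\<in>F. norm (cauchy_pairing phi (\<lambda>z. f z * h (of_real rho * z))
            - cauchy_pairing phi (\<lambda>z. f z * (\<Sum>k<n. tc h k * of_real rho ^ k * z ^ k))) \<le> e / 4"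
        unfolding eventually_sequentially by blast
      obtain q where q: "\<And>z. poly q z = (\<Sum>k<n. (tc h k * of_real rho ^ k) * z ^ k)"
        using poly_exists[of "\<lambda>k. tc h k * of_real rho ^ k" n] by blast
      define s' where "s' = (\<lambda>z. poly q z * f z)"
      have s'S: "s' \<in> {(\<lambda>z. p z * f z) | p. p \<in> analytic_polys}"
        unfolding s'_def analytic_polys_def by blast
      have s'eq: "s' = (\<lambda>z. f z * (\<Sum>k<n. tc h k * of_real rho ^ k * z ^ k))"
        unfolding s'_def by (rule ext) (simp add: q mult.commute)
      show "\<exists>s\<in>{(\<lambda>z. p z * f z) | p. p \<in> analytic_polys}.
              \<forall>phi\<in>F. norm (cauchy_pairing phi s - cauchy_pairing phi g) < e"
      proof (intro bexI[OF _ s'S] ballI)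
        fix phi assume phi: "phi \<in> F"
        define A where "A = cauchy_pairing phi s'"
        define B where "B = cauchy_pairing phi (\<lambda>z. f z * h (of_real rho * z))"
        define C where "C = cauchy_pairing phi (\<lambda>z. f z * h z)"
        define D where "D = cauchy_pairing phi g"
        have 1: "norm (B - A) \<le> e / 4" using nF phi unfolding A_def B_def s'eq by blast
        have 2: "norm (C - B) \<le> e / 4" using rhoF phi unfolding B_def C_def by blast
        have 3: "norm (C - D) < e / 3" using sg phi unfolding C_def D_def sdef by blast
        have eqAD: "A - D = (C - D) - ((C - B) + (B - A))" by simp
        have "norm (A - D) \<le> norm (C - D) + norm ((C - B) + (B - A))"
          unfolding eqAD by (rule norm_triangle_ineq4)
        also have "\<dots> \<le> norm (C - D) + (norm (C - B) + norm (B - A))"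
          by (intro add_left_mono norm_triangle_ineq)
        finally have "norm (A - D) \<le> norm (C - D) + norm (C - B) + norm (B - A)" by simp
        also have "\<dots> < e" using 1 2 3 e by linarith
        finally show "norm (cauchy_pairing phi s' - cauchy_pairing phi g) < e"
          unfolding A_def D_def .
      qed
    qed
  qed
qed


end
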